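(* Let $p$ be prime and $H\le\mathrm{S}_n$ be in $\mathfrak{InP}(\mathrm{C}_p)$ with $|H|=p^s$, and let $B,K,\gamma,D$ be as in the context. Let $F=\mathrm{GL}_s(p)\times D$ act on the set $\mathrm{M}(s,k,p)$ of $s\times k$ matrices over $\mathbb{F}_p$ by $M^{(R,d)}=R^{-1}Md$. Let $\kappa\in K$ and let $M,M'\in\mathrm{M}(s,k,p)$ be generator matrices of $\gamma(H)$ and $\gamma(H^{\kappa^{-1}})$ respectively. Then there exists $b\in B$ with $b\kappa\in N_{\mathrm{S}_n}(H)$ if and only if there exists $f\in F$ with $M^f=M'$.
   Context: $H\le\mathrm{S}_{n}$, $n=pk$, has orbits $\Omega_1,\dots,\Omega_k$ of size $p$ with each $G_i:=H|_{\Omega_i}$ cyclic of order $p$ (regarded as a subgroup of $\mathrm{S}_n$); $G=G_1\times\dots\times G_k$; $x^g=g^{-1}xg$, so $H^{\kappa^{-1}}=\kappa H\kappa^{-1}$. For a bijection $\varphi:\Omega_1\to\Omega_j$ ($j\neq1$), $\overline\varphi$ is the involution in $\mathrm{Sym}(\Omega_1\cup\Omega_j)$ with $\alpha^{\overline\varphi}=\varphi(\alpha)$ for $\alpha\in\Omega_1$. For $2\le j\le k$, $\phi_j:\Omega_1\to\Omega_j$ witnesses a permutation isomorphism from $G_1$ to $G_j$. $B=\langle N_{\mathrm{Sym}(\Omega_i)}(G_i):1\le i\le k\rangle$, $K=\langle\overline{\phi_j}:2\le j\le k\rangle$. $g_1$ generates $G_1$, $g_j=g_1^{\overline{\phi_j}}$,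 and $\gamma:G\to\mathbb{F}_p^k$ is $\gamma(g_1^{r_1}\cdots g_k^{r_k})=(r_1,\dots,r_k)$. $D$ is the group of diagonal matrices in $\mathrm{GL}_k(p)$. A generator matrix of a code is a matrix whose rows form a basis of it. *)

theory Defs
  imports "Berlekamp_Zassenhaus.Finite_Field" "Jordan_Normal_Form.Matrix"
begin

(* Permutations are functions nat => nat; the paper's right action alpha^g is written g alpha,
   so the paper product g h (g first, then h) is the function h \<circ> g. *)

definition Sn :: "nat \<Rightarrow> (nat \<Rightarrow> nat) set" where
  "Sn n = {\<sigma>. \<sigma> permutes {1..n}}"

definition is_perm_subgroup :: "(nat \<Rightarrow> nat) set \<Rightarrow> (nat \<Rightarrow> nat) set \<Rightarrow> bool" where
  "is_perm_subgroup H S \<longleftrightarrow> H \<subseteq> S \<and> id \<in> H \<and> (\<forall>g\<in>H. \<forall>h\<in>H. g \<circ> h \<in> H) \<and> (\<forall>g\<in>H. inv_into UNIV g \<in> H)"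

inductive_set gen_perm :: "(nat \<Rightarrow> nat) set \<Rightarrow> (nat \<Rightarrow> nat) set" for S where
  gen_id: "id \<in> gen_perm S"
| gen_mult: "s \<in> S \<Longrightarrow> g \<in> gen_perm S \<Longrightarrow> s \<circ> g \<in> gen_perm S"
| gen_inv: "s \<in> S \<Longrightarrow> g \<in> gen_perm S \<Longrightarrow> inv_into UNIV s \<circ> g \<in> gen_perm S"

(* the paper's x^g = g^{-1} x g, as functions *)
definition conjp :: "(nat \<Rightarrow> nat) \<Rightarrow> (nat \<Rightarrow> nat) \<Rightarrow> (nat \<Rightarrow> nat)" where
  "conjp x g = g \<circ> x \<circ> inv_into UNIV g"

definition normaliser :: "(nat \<Rightarrow> nat) set \<Rightarrow> (nat \<Rightarrow> nat) set \<Rightarrow> (nat \<Rightarrow> nat) set" where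
  "normaliser S H = {\<sigma> \<in> S. (\<lambda>h. conjp h \<sigma>) ` H = H}"

definition restr :: "nat set \<Rightarrow> (nat \<Rightarrow> nat) \<Rightarrow> (nat \<Rightarrow> nat)" where
  "restr A h = (\<lambda>x. if x \<in> A then h x else x)"

definition cyclic_of_order :: "(nat \<Rightarrow> nat) set \<Rightarrow> nat \<Rightarrow> bool" where
  "cyclic_of_order G p \<longleftrightarrow> card G = p \<and> (\<exists>g\<in>G. G = range (\<lambda>m. g ^^ m))"

definition perm_iso_witness ::
  "nat set \<Rightarrow> nat set \<Rightarrow> (nat \<Rightarrow> nat) set \<Rightarrow> (nat \<Rightarrow> nat) set \<Rightarrow> (nat \<Rightarrow> nat) \<Rightarrow> bool" where
  "perm_iso_witness A B GA GB \<phi> \<longleftrightarrow> bij_betw \<phi> A B \<and>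
     (\<exists>\<psi>. bij_betw \<psi> GA GB \<and> (\<forall>g\<in>GA. \<forall>h\<in>GA. \<psi> (g \<circ> h) = \<psi> g \<circ> \<psi> h) \<and>
          (\<forall>g\<in>GA. \<forall>\<alpha>\<in>A. \<phi> (g \<alpha>) = (\<psi> g) (\<phi> \<alpha>)))"

definition ovl :: "nat set \<Rightarrow> nat set \<Rightarrow> (nat \<Rightarrow> nat) \<Rightarrow> (nat \<Rightarrow> nat)" where
  "ovl A B \<phi> = (\<lambda>x. if x \<in> A then \<phi> x else if x \<in> B then inv_into A \<phi> x else x)"

(* g_1^{r_1} ... g_k^{r_k}, the exponents taken as representatives in {0..p-1} *)
definition prod_pows :: "nat \<Rightarrow> (nat \<Rightarrow> nat \<Rightarrow> nat) \<Rightarrow> 'p::finite mod_ring vec \<Rightarrow> (nat \<Rightarrow> nat)" where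
  "prod_pows k gs r = foldr (\<lambda>i f. f \<circ> (gs i ^^ nat (to_int_mod_ring (r $ i)))) [0..<k] id"

definition gammap :: "nat \<Rightarrow> (nat \<Rightarrow> nat \<Rightarrow> nat) \<Rightarrow> (nat \<Rightarrow> nat) \<Rightarrow> 'p::finite mod_ring vec" where
  "gammap k gs g = (THE r. r \<in> carrier_vec k \<and> g = prod_pows k gs r)"

(* rows of M form a basis of V *)
definition generator_matrix :: "'a::field mat \<Rightarrow> nat \<Rightarrow> nat \<Rightarrow> 'a vec set \<Rightarrow> bool" where
  "generator_matrix M s k V \<longleftrightarrow> M \<in> carrier_mat s k \<and>
     {transpose_mat M *\<^sub>v c | c. c \<in> carrier_vec s} = V \<and>
     (\<forall>c \<in> carrier_vec s. transpose_mat M *\<^sub>v c = 0\<^sub>v k \<longrightarrow> c = 0\<^sub>v s)"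

definition GLmat :: "nat \<Rightarrow> 'a::field mat set" where
  "GLmat s = {R \<in> carrier_mat s s. invertible_mat R}"

definition Dmat :: "nat \<Rightarrow> 'a::field mat set" where
  "Dmat k = {d \<in> carrier_mat k k. diagonal_mat d \<and> (\<forall>i<k. d $$ (i,i) \<noteq> 0)}"

definition mat_inv :: "nat \<Rightarrow> 'a::field mat \<Rightarrow> 'a mat" where
  "mat_inv s R = (THE Ri. Ri \<in> carrier_mat s s \<and> R * Ri = 1\<^sub>m s \<and> Ri * R = 1\<^sub>m s)"

definition Fact :: "nat \<Rightarrow> 'a::field mat \<Rightarrow> 'a mat \<times> 'a mat \<Rightarrow> 'a mat" where
  "Fact s M f = mat_inv s (fst f) * M * snd f"

end

theory Submission
  imports Defs "Jordan_Normal_Form.Determinant"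
begin

lemma bij_o_inv: "bij s \<Longrightarrow> s \<circ> inv_into UNIV s = id"
  using bij_is_surj surj_iff by blast

lemma bij_inv_o: "bij s \<Longrightarrow> inv_into UNIV s \<circ> s = id"
  using bij_is_inj inj_iff by blast

lemma conjp_apply: "bij s \<Longrightarrow> conjp x s (s y) = s (x y)"
  unfolding conjp_def by (simp add: bij_is_inj)

lemma conjp_eq_iff: "bij s \<Longrightarrow> conjp x s = y \<longleftrightarrow> s \<circ> x = y \<circ> s"
proof
  assume b: "bij s" and "conjp x s = y"
  then show "s \<circ> x = y \<circ> s" using conjp_apply[OF b] by auto
next
  assume b: "bij s" and h: "s \<circ> x = y \<circ> s"
  show "conjp x s = y"
  proof
    fix z
    obtain w where "z = s w" using b by (metis bij_pointE)
    then show "conjp x s z = y z" using h conjp_apply[OF b] by (metis comp_apply)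
  qed
qed

lemma conjp_comp: "bij a \<Longrightarrow> bij b \<Longrightarrow> conjp x (a \<circ> b) = conjp (conjp x b) a"
  unfolding conjp_def by (simp add: o_inv_distrib comp_assoc)

lemma conjp_o: assumes "bij s" shows "conjp (f \<circ> g) s = conjp f s \<circ> conjp g s"
proof -
  have "s \<circ> (f \<circ> g) = (conjp f s \<circ> conjp g s) \<circ> s"
    by (rule ext) (simp add: conjp_apply[OF assms])
  then show ?thesis using conjp_eq_iff[OF assms] by blast
qed

lemma conjp_idp: "bij s \<Longrightarrow> conjp id s = id"
  by (simp add: conjp_eq_iff)

lemma conjp_pow: "bij s \<Longrightarrow> conjp (f^^m) s = (conjp f s)^^m"
  by (induction m) (simp_all add: conjp_idp conjp_o)

lemma conjp_inv1: "bij s \<Longrightarrow> conjp (conjp x s) (inv_into UNIV s) = x"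
  by (simp add: conjp_eq_iff bij_imp_bij_inv fun_eq_iff conjp_def bij_is_inj inv_inv_eq)

lemma conjp_inv2: "bij s \<Longrightarrow> conjp (conjp x (inv_into UNIV s)) s = x"
  by (simp add: conjp_eq_iff bij_imp_bij_inv fun_eq_iff conjp_def bij_is_surj surj_f_inv_f inv_inv_eq)

lemma conjp_inj: "bij s \<Longrightarrow> inj (\<lambda>g. conjp g s)"
  by (metis conjp_inv1 injI)

lemma gen_perm_comp: "g \<in> gen_perm S \<Longrightarrow> h \<in> gen_perm S \<Longrightarrow> g \<circ> h \<in> gen_perm S"
proof (induction g rule: gen_perm.induct)
  case gen_id
  then show ?case by simp
next
  case (gen_mult s g)
  then show ?case by (metis comp_assoc gen_perm.gen_mult)
next
  case (gen_inv s g)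
  then show ?case by (metis comp_assoc gen_perm.gen_inv)
qed

lemma gen_perm_gen: "s \<in> S \<Longrightarrow> s \<in> gen_perm S"
  using gen_perm.gen_mult[OF _ gen_perm.gen_id] by simp

lemma funpow_inj_eq:
  assumes "bij g" "(g ^^ a) = g ^^ b" "a \<le> b" shows "g ^^ (b - a) = id"
proof -
  have "g ^^ a \<circ> g ^^ (b - a) = g ^^ a \<circ> id" using assms
    by (metis funpow_add le_add_diff_inverse comp_id)
  moreover have "inj (g ^^ a)" using assms(1) bij_is_inj inj_fn by blast
  ultimately show ?thesis by (simp add: fun_eq_iff inj_eq)
qed

lemma funpow_mod_period: "g ^^ d = id \<Longrightarrow> g ^^ m = g ^^ (m mod d)"
proof -
  assume h: "g ^^ d = id"
  have q: "g ^^ (d * q) = id" for q by (induction q) (simp_all add: funpow_add h)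
  have "g ^^ m = g ^^ (d * (m div d) + m mod d)" by simp
  also have "\<dots> = g ^^ (d * (m div d)) \<circ> g ^^ (m mod d)" by (simp only: funpow_add)
  also have "\<dots> = g ^^ (m mod d)" by (simp only: q) simp
  finally show ?thesis .
qed

lemma order_facts:
  assumes "bij g" "card (range (\<lambda>m. g ^^ m)) = p" "0 < p"
  shows "g ^^ p = id" "inj_on (\<lambda>m. g ^^ m) {..<p}"
proof -
  have fin: "finite (range (\<lambda>m. g ^^ m))"
  proof (rule ccontr)
    assume "infinite (range (\<lambda>m. g ^^ m))"
    then have "card (range (\<lambda>m. g ^^ m)) = 0" by (rule card.infinite)
    then show False using assms(2,3) by linarith
  qed
  have bound: "p \<le> d" if "0 < d" "g ^^ d = id" for d
  proof -
    have "g ^^ m \<in> (\<lambda>m. g ^^ m) ` {..<d}" for m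
    proof -
      have "m mod d < d" using that(1) by simp
      then have "g ^^ (m mod d) \<in> (\<lambda>m. g ^^ m) ` {..<d}" by blast
      moreover have "g ^^ m = g ^^ (m mod d)" by (rule funpow_mod_period[OF that(2)])
      ultimately show ?thesis by (simp only:)
    qed
    then have "range (\<lambda>m. g ^^ m) \<subseteq> (\<lambda>m. g ^^ m) ` {..<d}" by blast
    then have "card (range (\<lambda>m. g ^^ m)) \<le> card ((\<lambda>m. g ^^ m) ` {..<d})"
      by (simp add: card_mono)
    also have "\<dots> \<le> d" using card_image_le[of "{..<d}" "\<lambda>m. g ^^ m"] by simp
    finally show ?thesis using assms(2) by simp
  qed
  have key: "False" if "a < b" "b \<le> p" "g ^^ a = g ^^ b" "b - a < p" for a b
  proof -
    have "g ^^ (b - a) = id" using funpow_inj_eq[OF assms(1) that(3)] that(1) by simp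
    then have "p \<le> b - a" using bound[of "b - a"] that(1) by simp
    then show False using that(4) by simp
  qed
  show inj: "inj_on (\<lambda>m. g ^^ m) {..<p}"
  proof (rule inj_onI, rule ccontr)
    fix a b assume ab: "a \<in> {..<p}" "b \<in> {..<p}" "g ^^ a = g ^^ b" "a \<noteq> b"
    show False
    proof (cases "a < b")
      case True
      then show ?thesis using key[of a b] ab by force
    next
      case False
      then show ?thesis using key[of b a] ab by force
    qed
  qed
  have "\<not> inj_on (\<lambda>m. g ^^ m) {..p}"
  proof
    assume "inj_on (\<lambda>m. g ^^ m) {..p}"
    then have "card ((\<lambda>m. g ^^ m) ` {..p}) = Suc p" by (simp add: card_image)
    moreover have "card ((\<lambda>m. g ^^ m) ` {..p}) \<le> p"
      using card_mono[OF fin, of "(\<lambda>m. g ^^ m) ` {..p}"] assms(2) by auto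
    ultimately show False by simp
  qed
  then obtain a b where ab0: "a \<le> p" "b \<le> p" "g ^^ a = g ^^ b" "a \<noteq> b"
    unfolding inj_on_def by auto
  then obtain a b where ab: "a \<le> p" "b \<le> p" "g ^^ a = g ^^ b" "a < b"
    by (metis linorder_neqE_nat)
  then have id: "g ^^ (b - a) = id" using funpow_inj_eq[OF assms(1)] by simp
  have "b - a = p"
  proof (rule ccontr)
    assume "b - a \<noteq> p"
    then have "b - a < p" using ab by simp
    then show False using key[of a b] ab by simp
  qed
  then show "g ^^ p = id" using id by simp
qed


lemma bij_fix_permutes:
  assumes "bij f" "\<And>x. x \<notin> S \<Longrightarrow> f x = x" shows "f permutes S"
  unfolding permutes_def
proof (intro conjI allI impI)
  fix x assume "x \<notin> S" then show "f x = x" using assms(2) by simp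
next
  fix y
  obtain x where x: "y = f x" using assms(1) by (metis bij_pointE)
  show "\<exists>!x. f x = y"
  proof (rule ex1I)
    show "f x = y" using x by simp
    show "\<And>z. f z = y \<Longrightarrow> z = x" using x assms(1) by (simp add: bij_is_inj inj_eq)
  qed
qed

locale blk =
  fixes n k p :: nat and A :: "nat \<Rightarrow> nat set" and H :: "(nat \<Rightarrow> nat) set"
    and \<phi> :: "nat \<Rightarrow> nat \<Rightarrow> nat" and g1 :: "nat \<Rightarrow> nat"
  assumes p_prime: "prime p"
    and n_def: "n = p * k" and k_pos: "0 < k"
    and H_sub: "is_perm_subgroup H (Sn n)"
    and cover: "(\<Union>i<k. A i) = {1..n}"
    and disj: "\<forall>i<k. \<forall>j<k. i \<noteq> j \<longrightarrow> A i \<inter> A j = {}"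
    and cardA: "\<forall>i<k. card (A i) = p"
    and orbits: "\<forall>i<k. \<forall>x\<in>A i. {h x | h. h \<in> H} = A i"
    and cyc: "\<forall>i<k. cyclic_of_order (restr (A i) ` H) p"
    and phi: "\<forall>j. 1 \<le> j \<and> j < k \<longrightarrow> perm_iso_witness (A 0) (A j) (restr (A 0) ` H) (restr (A j) ` H) (\<phi> j)"
    and g1_gen: "restr (A 0) ` H = range (\<lambda>m. g1 ^^ m)"
begin

definition G :: "nat \<Rightarrow> (nat \<Rightarrow> nat) set" where "G i = restr (A i) ` H"
definition ov :: "nat \<Rightarrow> nat \<Rightarrow> nat" where "ov j = ovl (A 0) (A j) (\<phi> j)"
definition gs :: "nat \<Rightarrow> nat \<Rightarrow> nat" where "gs j = (if j = 0 then g1 else conjp g1 (ov j))"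

lemma p_gt1: "1 < p" using p_prime prime_gt_1_nat by blast

lemma A_sub: "i < k \<Longrightarrow> A i \<subseteq> {1..n}" using cover by blast

lemma A_fin: "i < k \<Longrightarrow> finite (A i)" using A_sub finite_subset by blast

lemma A_ne: "i < k \<Longrightarrow> A i \<noteq> {}" using cardA p_gt1 by force

lemma A_disj: "i < k \<Longrightarrow> j < k \<Longrightarrow> i \<noteq> j \<Longrightarrow> x \<in> A i \<Longrightarrow> x \<notin> A j"
  using disj by blast

lemma outside: "x \<notin> {1..n} \<Longrightarrow> i < k \<Longrightarrow> x \<notin> A i" using A_sub by blast

lemma inside: "x \<in> {1..n} \<Longrightarrow> \<exists>i<k. x \<in> A i" using cover by blast

lemma H_perm: "h \<in> H \<Longrightarrow> h permutes {1..n}"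
  using H_sub unfolding is_perm_subgroup_def Sn_def by blast

lemma H_bij: "h \<in> H \<Longrightarrow> bij h" using H_perm permutes_bij by blast

lemma H_id: "id \<in> H" using H_sub unfolding is_perm_subgroup_def by blast

lemma H_inv: "h \<in> H \<Longrightarrow> inv_into UNIV h \<in> H" using H_sub unfolding is_perm_subgroup_def by blast

lemma H_block: "h \<in> H \<Longrightarrow> i < k \<Longrightarrow> x \<in> A i \<Longrightarrow> h x \<in> A i"
  using orbits by blast

lemma H_image: assumes "h \<in> H" "i < k" shows "h ` A i = A i"
proof
  show "h ` A i \<subseteq> A i" using H_block assms by blast
  show "A i \<subseteq> h ` A i"
  proof
    fix x assume x: "x \<in> A i"
    have "inv_into UNIV h x \<in> A i" using H_block[OF H_inv[OF assms(1)] assms(2) x] .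
    moreover have "h (inv_into UNIV h x) = x" using H_bij[OF assms(1)] bij_is_surj surj_f_inv_f by metis
    ultimately show "x \<in> h ` A i" by (metis image_eqI)
  qed
qed

lemma restr_perm: assumes "h \<in> H" "i < k" shows "restr (A i) h permutes A i"
proof (rule bij_imp_permutes)
  have "bij_betw h (A i) (A i)"
    using H_image[OF assms] H_bij[OF assms(1)] bij_is_inj inj_on_subset
    by (metis bij_betw_def subset_UNIV)
  then show "bij_betw (restr (A i) h) (A i) (A i)"
    by (rule bij_betw_cong[THEN iffD1, rotated]) (simp add: restr_def)
  show "\<And>x. x \<notin> A i \<Longrightarrow> restr (A i) h x = x" by (simp add: restr_def)
qed

lemma G_perm: assumes "i < k" "g \<in> G i" shows "g permutes A i"
proof -
  obtain h where "h \<in> H" "g = restr (A i) h" using assms(2) unfolding G_def by blast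
  then show ?thesis using restr_perm assms(1) by simp
qed

lemma G_bij: "i < k \<Longrightarrow> g \<in> G i \<Longrightarrow> bij g"
  by (rule permutes_bij[OF G_perm])

lemma G_out: "i < k \<Longrightarrow> g \<in> G i \<Longrightarrow> x \<notin> A i \<Longrightarrow> g x = x"
  by (rule permutes_not_in[OF G_perm])

lemma G_in: assumes "i < k" "g \<in> G i" "x \<in> A i" shows "g x \<in> A i"
  using permutes_in_image[OF G_perm[OF assms(1,2)], of x] assms(3) by simp

lemma id_G: "id \<in> G i"
proof -
  have "restr (A i) id = id" by (simp add: restr_def fun_eq_iff)
  then have "restr (A i) id \<in> G i" unfolding G_def using H_id by blast
  then show ?thesis using \<open>restr (A i) id = id\<close> by simp
qed

lemma G_cyc: assumes "i < k" shows "cyclic_of_order (G i) p"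
proof -
  have "cyclic_of_order (restr (A i) ` H) p" using cyc assms by blast
  then show ?thesis by (simp only: G_def)
qed

lemma G_card: "i < k \<Longrightarrow> card (G i) = p"
proof -
  assume "i < k"
  then have "cyclic_of_order (G i) p" by (rule G_cyc)
  then show ?thesis unfolding cyclic_of_order_def by (rule conjunct1)
qed

lemma G_fin: assumes "i < k" shows "finite (G i)"
proof -
  have "card (G i) \<noteq> 0" using G_card[OF assms] p_gt1 by simp
  then show ?thesis using card_ge_0_finite by blast
qed

lemma ov_facts:
  assumes j: "1 \<le> j" "j < k"
  shows "bij_betw (\<phi> j) (A 0) (A j)"
    and "\<And>x. x \<in> A 0 \<Longrightarrow> ov j x = \<phi> j x"
    and "\<And>x. x \<in> A 0 \<Longrightarrow> ov j x \<in> A j"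
    and "\<And>x. x \<in> A j \<Longrightarrow> ov j x \<in> A 0"
    and "\<And>x. x \<notin> A 0 \<Longrightarrow> x \<notin> A j \<Longrightarrow> ov j x = x"
    and "\<And>x. ov j (ov j x) = x"
proof -
  show bj: "bij_betw (\<phi> j) (A 0) (A j)" using phi j unfolding perm_iso_witness_def by blast
  have d: "A 0 \<inter> A j = {}" using disj j by auto
  show "\<And>x. x \<in> A 0 \<Longrightarrow> ov j x = \<phi> j x" by (simp add: ov_def ovl_def)
  show i0: "\<And>x. x \<in> A 0 \<Longrightarrow> ov j x \<in> A j" using bj by (auto simp: ov_def ovl_def bij_betw_def)
  show ij: "\<And>x. x \<in> A j \<Longrightarrow> ov j x \<in> A 0"
    using bj d by (auto simp: ov_def ovl_def bij_betw_def inv_into_into)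
  show "\<And>x. x \<notin> A 0 \<Longrightarrow> x \<notin> A j \<Longrightarrow> ov j x = x" by (simp add: ov_def ovl_def)
  show "\<And>x. ov j (ov j x) = x"
  proof -
    fix x
    show "ov j (ov j x) = x"
    proof (cases "x \<in> A 0")
      case True
      then have "\<phi> j x \<in> A j" "\<phi> j x \<notin> A 0" using bj d by (auto simp: bij_betw_def)
      then show ?thesis using True bj by (simp add: ov_def ovl_def bij_betw_def)
    next
      case False
      note F = False
      show ?thesis
      proof (cases "x \<in> A j")
        case True
        have "inv_into (A 0) (\<phi> j) x \<in> A 0" using True bj by (auto simp: bij_betw_def inv_into_into)
        moreover have "\<phi> j (inv_into (A 0) (\<phi> j) x) = x" using True bj
          by (simp add: bij_betw_def f_inv_into_f)
        ultimately show ?thesis using True F by (simp add: ov_def ovl_def)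
      next
        case False
        then show ?thesis using F by (simp add: ov_def ovl_def)
      qed
    qed
  qed
qed

lemma ov_bij: "1 \<le> j \<Longrightarrow> j < k \<Longrightarrow> bij (ov j)"
  by (rule o_bij[of "ov j"]) (simp_all add: fun_eq_iff ov_facts(6))

lemma ov_inv: "1 \<le> j \<Longrightarrow> j < k \<Longrightarrow> inv_into UNIV (ov j) = ov j"
  using ov_facts(6) by (intro inv_unique_comp) (auto simp: fun_eq_iff)

lemma ov_perm: assumes "1 \<le> j" "j < k" shows "ov j permutes {1..n}"
proof (rule bij_fix_permutes[OF ov_bij[OF assms]])
  fix x assume "x \<notin> {1..n}"
  then show "ov j x = x" using outside assms ov_facts(5)[OF assms] k_pos by simp
qed

end

context blk begin

lemma g1_G: "g1 \<in> G 0"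
proof -
  have "g1 = g1 ^^ 1" by simp
  then show ?thesis using g1_gen unfolding G_def by (metis rangeI)
qed

lemma gs_gen: assumes "i < k" shows "G i = range (\<lambda>m. gs i ^^ m)"
proof (cases "i = 0")
  case True
  then show ?thesis using g1_gen by (simp add: G_def gs_def)
next
  case False
  then have j: "1 \<le> i" "i < k" using assms by auto
  obtain \<psi> where bj: "bij_betw \<psi> (G 0) (G i)"
    and hom: "\<forall>g\<in>G 0. \<forall>h\<in>G 0. \<psi> (g \<circ> h) = \<psi> g \<circ> \<psi> h"
    and cmp: "\<forall>g\<in>G 0. \<forall>\<alpha>\<in>A 0. \<phi> i (g \<alpha>) = (\<psi> g) (\<phi> i \<alpha>)"
    using phi j unfolding perm_iso_witness_def G_def by blast
  have psiG: "\<psi> g \<in> G i" if "g \<in> G 0" for g using bj that by (simp add: bij_betw_def image_iff) (metis bj bij_betwE that)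
  have g1G: "g1 \<in> G 0" by (rule g1_G)
  have gsi: "gs i = \<psi> g1"
  proof
    fix x
    have gx: "gs i x = ov i (g1 (ov i x))"
      using False ov_inv[OF j] by (simp add: gs_def conjp_def)
    show "gs i x = \<psi> g1 x"
    proof (cases "x \<in> A i")
      case True
      define a where "a = ov i x"
      have a: "a \<in> A 0" using ov_facts(4)[OF j True] a_def by simp
      have xa: "x = \<phi> i a" using ov_facts(6)[OF j, of x] ov_facts(2)[OF j a] a_def by simp
      have "g1 a \<in> A 0" using G_in[OF k_pos g1G a] .
      then have "ov i (g1 a) = \<phi> i (g1 a)" using ov_facts(2)[OF j] by simp
      also have "\<dots> = \<psi> g1 (\<phi> i a)" using bspec[OF bspec[OF cmp g1G] a] .
      finally have c: "ov i (g1 a) = \<psi> g1 (\<phi> i a)" .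
      have e1: "gs i x = ov i (g1 a)" using gx a_def by simp
      show ?thesis using e1 c xa by simp
    next
      case False
      note F = False
      have "\<psi> g1 x = x" using G_out[OF assms psiG[OF g1G] F] .
      moreover have "gs i x = x"
      proof (cases "x \<in> A 0")
        case True
        have "ov i x \<in> A i" using ov_facts(3)[OF j True] .
        then have "ov i x \<notin> A 0" using A_disj[OF assms k_pos] j by simp
        then have "g1 (ov i x) = ov i x" using G_out[OF k_pos g1G] by simp
        then show ?thesis using gx ov_facts(6)[OF j] by simp
      next
        case False
        then have "ov i x = x" using ov_facts(5)[OF j _ F] by simp
        moreover have "g1 x = x" using G_out[OF k_pos g1G False] .
        ultimately show ?thesis using gx by simp
      qed
      ultimately show ?thesis by simp
    qed
  qed
  have psi_id: "\<psi> id = id"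
  proof -
    have eq: "\<psi> id \<circ> \<psi> id = \<psi> id" using bspec[OF bspec[OF hom id_G] id_G] by simp
    have b: "bij (\<psi> id)" using G_bij[OF assms psiG[OF id_G]] .
    have i: "inv_into UNIV (\<psi> id) \<circ> \<psi> id = id" using bij_inv_o[OF b] .
    have "\<psi> id = (inv_into UNIV (\<psi> id) \<circ> \<psi> id) \<circ> \<psi> id" using i by simp
    also have "\<dots> = inv_into UNIV (\<psi> id) \<circ> (\<psi> id \<circ> \<psi> id)" by (simp only: o_assoc)
    also have "\<dots> = id" using eq i by simp
    finally show ?thesis .
  qed
  have g1pow: "g1 ^^ m \<in> G 0" for m using g1_gen unfolding G_def by blast
  have psipow: "\<psi> (g1 ^^ m) = (\<psi> g1) ^^ m" for m
  proof (induction m)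
    case 0
    then show ?case using psi_id by (simp only: funpow.simps)
  next
    case (Suc m)
    have "\<psi> (g1 ^^ Suc m) = \<psi> (g1 \<circ> g1 ^^ m)" by (simp only: funpow.simps)
    also have "\<dots> = \<psi> g1 \<circ> \<psi> (g1 ^^ m)" using bspec[OF bspec[OF hom g1G] g1pow] .
    also have "\<dots> = \<psi> g1 \<circ> (\<psi> g1) ^^ m" using Suc by (simp only:)
    also have "\<dots> = (\<psi> g1) ^^ Suc m" by (simp only: funpow.simps)
    finally show ?case .
  qed
  have "G i = \<psi> ` G 0" using bj by (simp add: bij_betw_def)
  also have "\<dots> = \<psi> ` range (\<lambda>m. g1 ^^ m)" using g1_gen by (simp add: G_def)
  also have "\<dots> = range (\<lambda>m. gs i ^^ m)" using psipow gsi by (auto simp: image_iff)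
  finally show ?thesis .
qed

lemma gs_pow_G: "i < k \<Longrightarrow> gs i ^^ m \<in> G i"
  using gs_gen by blast

lemma gs_G: "i < k \<Longrightarrow> gs i \<in> G i"
  using gs_pow_G[of i 1] by simp

lemma gs_bij: "i < k \<Longrightarrow> bij (gs i)"
  using G_bij gs_G by blast

lemma gs_order: assumes "i < k" shows "gs i ^^ p = id" "inj_on (\<lambda>m. gs i ^^ m) {..<p}"
proof -
  have c: "card (range (\<lambda>m. gs i ^^ m)) = p" using G_card[OF assms] gs_gen[OF assms] by simp
  show "gs i ^^ p = id" "inj_on (\<lambda>m. gs i ^^ m) {..<p}"
    using order_facts[OF gs_bij[OF assms] c] p_gt1 by auto
qed

lemma gs_period: "i < k \<Longrightarrow> gs i ^^ m = gs i ^^ (m mod p)"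
  by (rule funpow_mod_period[OF gs_order(1)])

lemma gs_pow_out: "i < k \<Longrightarrow> x \<notin> A i \<Longrightarrow> (gs i ^^ m) x = x"
  by (rule G_out[OF _ gs_pow_G])

lemma gs_pow_in: "i < k \<Longrightarrow> x \<in> A i \<Longrightarrow> (gs i ^^ m) x \<in> A i"
  by (rule G_in[OF _ gs_pow_G])

lemma gs_neq_id: "i < k \<Longrightarrow> gs i \<noteq> id"
proof
  assume "i < k" "gs i = id"
  then have "gs i ^^ 1 = gs i ^^ 0" by simp
  moreover have "(1::nat) \<in> {..<p}" "(0::nat) \<in> {..<p}" using p_gt1 by auto
  ultimately show False using inj_onD[OF gs_order(2)[OF \<open>i < k\<close>]] by fastforce
qed

end

context blk begin

lemma foldr_apply:
  assumes "distinct xs" "set xs \<subseteq> {..<k}"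
    and fx: "\<forall>i\<in>set xs. \<forall>x. x \<notin> A i \<longrightarrow> F i x = x"
    and into: "\<forall>i\<in>set xs. \<forall>x\<in>A i. F i x \<in> A i"
  shows "(\<forall>i\<in>set xs. \<forall>x\<in>A i. foldr (\<lambda>i f. f \<circ> F i) xs id x = F i x) \<and>
         (\<forall>x. (\<forall>i\<in>set xs. x \<notin> A i) \<longrightarrow> foldr (\<lambda>i f. f \<circ> F i) xs id x = x)"
  using assms
proof (induction xs)
  case Nil
  then show ?case by simp
next
  case (Cons j xs)
  have IH: "(\<forall>i\<in>set xs. \<forall>x\<in>A i. foldr (\<lambda>i f. f \<circ> F i) xs id x = F i x) \<and>
         (\<forall>x. (\<forall>i\<in>set xs. x \<notin> A i) \<longrightarrow> foldr (\<lambda>i f. f \<circ> F i) xs id x = x)"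
  proof (rule Cons.IH)
    show "distinct xs" using Cons.prems(1) by simp
    show "set xs \<subseteq> {..<k}" using Cons.prems(2) by simp
    show "\<forall>i\<in>set xs. \<forall>x. x \<notin> A i \<longrightarrow> F i x = x" using Cons.prems(3) by simp
    show "\<forall>i\<in>set xs. \<forall>x\<in>A i. F i x \<in> A i" using Cons.prems(4) by simp
  qed
  have fold: "foldr (\<lambda>i f. f \<circ> F i) (j # xs) id x = foldr (\<lambda>i f. f \<circ> F i) xs id (F j x)" for x
    by simp
  have jk: "j < k" using Cons.prems(2) by simp
  have jn: "j \<notin> set xs" using Cons.prems(1) by simp
  have xsk: "\<forall>l\<in>set xs. l < k" using Cons.prems(2) by auto
  show ?case
  proof (intro conjI ballI allI impI)
    fix i x assume i: "i \<in> set (j # xs)" and x: "x \<in> A i"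
    show "foldr (\<lambda>i f. f \<circ> F i) (j # xs) id x = F i x"
    proof (cases "i = j")
      case True
      have Fx: "F j x \<in> A j" using Cons.prems(4) x True by simp
      have "\<forall>l\<in>set xs. F j x \<notin> A l"
      proof
        fix l assume l: "l \<in> set xs"
        then have "l \<noteq> j" "l < k" using jn xsk by auto
        then show "F j x \<notin> A l" using A_disj[OF jk _ _ Fx] by simp
      qed
      then have "foldr (\<lambda>i f. f \<circ> F i) xs id (F j x) = F j x" using IH by blast
      then show ?thesis using fold True by simp
    next
      case False
      then have ixs: "i \<in> set xs" using i by simp
      then have "x \<notin> A j" using A_disj[of i j x] xsk jk x False by simp
      then have "F j x = x" using Cons.prems(3) by simp
      then show ?thesis using fold IH ixs x by simp
    qed
  next
    fix x assume x: "\<forall>i\<in>set (j # xs). x \<notin> A i"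
    then have "F j x = x" using Cons.prems(3) by simp
    then show "foldr (\<lambda>i f. f \<circ> F i) (j # xs) id x = x" using fold IH x by simp
  qed
qed

lemma pp_facts:
  fixes r :: "'q::prime_card mod_ring vec"
  shows "(\<forall>i<k. \<forall>x\<in>A i. prod_pows k gs r x = (gs i ^^ nat (to_int_mod_ring (r $ i))) x) \<and>
         (\<forall>x. x \<notin> {1..n} \<longrightarrow> prod_pows k gs r x = x)"
proof -
  let ?F = "\<lambda>i. gs i ^^ nat (to_int_mod_ring (r $ i))"
  have F1: "\<forall>i\<in>set [0..<k]. \<forall>x. x \<notin> A i \<longrightarrow> ?F i x = x" using gs_pow_out by simp
  have F2: "\<forall>i\<in>set [0..<k]. \<forall>x\<in>A i. ?F i x \<in> A i" using gs_pow_in by simp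
  have pp: "prod_pows k gs r = foldr (\<lambda>i f. f \<circ> ?F i) [0..<k] id" by (simp add: prod_pows_def)
  have *: "(\<forall>i\<in>set [0..<k]. \<forall>x\<in>A i. foldr (\<lambda>i f. f \<circ> ?F i) [0..<k] id x = ?F i x) \<and>
         (\<forall>x. (\<forall>i\<in>set [0..<k]. x \<notin> A i) \<longrightarrow> foldr (\<lambda>i f. f \<circ> ?F i) [0..<k] id x = x)"
    by (rule foldr_apply[OF _ _ F1 F2]) auto
  show ?thesis
  proof (intro conjI allI impI ballI)
    fix i x assume "i < k" "x \<in> A i"
    then show "prod_pows k gs r x = ?F i x" using * pp by simp
  next
    fix x assume "x \<notin> {1..n}"
    then have "\<forall>i\<in>set [0..<k]. x \<notin> A i" using outside by simp
    then show "prod_pows k gs r x = x" using * pp by simp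
  qed
qed

lemma pp_in: "i < k \<Longrightarrow> x \<in> A i \<Longrightarrow>
   prod_pows k gs (r :: 'q::prime_card mod_ring vec) x = (gs i ^^ nat (to_int_mod_ring (r $ i))) x"
  using pp_facts by blast

lemma pp_out: "x \<notin> {1..n} \<Longrightarrow> prod_pows k gs (r :: 'q::prime_card mod_ring vec) x = x"
  using pp_facts by blast

lemma to_int_bounds: "0 \<le> to_int_mod_ring (x :: 'q::prime_card mod_ring)"
   "to_int_mod_ring (x :: 'q::prime_card mod_ring) < int CARD('q)"
  using range_to_int_mod_ring[where 'a='q] by (metis atLeastLessThan_iff rangeI)+

lemma to_int_of_nat: "m < CARD('q) \<Longrightarrow> to_int_mod_ring (of_nat m :: 'q::prime_card mod_ring) = int m"
  by (simp add: of_nat_of_int_mod_ring)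

lemma pp_inj:
  fixes r r' :: "'q::prime_card mod_ring vec"
  assumes q: "CARD('q) = p" and r: "r \<in> carrier_vec k" "r' \<in> carrier_vec k"
    and eq: "prod_pows k gs r = prod_pows k gs r'"
  shows "r = r'"
proof (rule eq_vecI)
  show "dim_vec r = dim_vec r'" using r by simp
  fix i assume "i < dim_vec r'"
  then have i: "i < k" using r by simp
  let ?a = "nat (to_int_mod_ring (r $ i))" and ?b = "nat (to_int_mod_ring (r' $ i))"
  have "gs i ^^ ?a = gs i ^^ ?b"
  proof
    fix x
    show "(gs i ^^ ?a) x = (gs i ^^ ?b) x"
    proof (cases "x \<in> A i")
      case True
      then show ?thesis using pp_in[OF i True, of r] pp_in[OF i True, of r'] eq by simp
    next
      case False
      then show ?thesis using gs_pow_out[OF i False] by simp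
    qed
  qed
  moreover have "?a \<in> {..<p}" "?b \<in> {..<p}" using to_int_bounds[of "r $ i"] to_int_bounds[of "r' $ i"] q
    by auto
  ultimately have "?a = ?b" using inj_onD[OF gs_order(2)[OF i]] by blast
  moreover have ea: "int ?a = to_int_mod_ring (r $ i)" using to_int_bounds[of "r $ i"] by simp
  moreover have eb: "int ?b = to_int_mod_ring (r' $ i)" using to_int_bounds[of "r' $ i"] by simp
  ultimately have "to_int_mod_ring (r $ i) = to_int_mod_ring (r' $ i)" by metis
  then show "r $ i = r' $ i" by (metis of_int_mod_ring_to_int_mod_ring)
qed

lemma gammap_pp:
  fixes r :: "'q::prime_card mod_ring vec"
  assumes q: "CARD('q) = p" and r: "r \<in> carrier_vec k"
  shows "gammap k gs (prod_pows k gs r) = r"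
  unfolding gammap_def
proof (rule the_equality)
  show "r \<in> carrier_vec k \<and> prod_pows k gs r = prod_pows k gs r" using r by simp
  fix r' :: "'q mod_ring vec" assume "r' \<in> carrier_vec k \<and> prod_pows k gs r = prod_pows k gs r'"
  then show "r' = r" using pp_inj[OF q] r by metis
qed

lemma H_pp:
  assumes q: "CARD('q::prime_card) = p" and h: "h \<in> H"
  shows "\<exists>r :: 'q mod_ring vec. r \<in> carrier_vec k \<and> h = prod_pows k gs r"
proof -
  have "\<exists>m. restr (A i) h = gs i ^^ m" if "i < k" for i
  proof -
    have "restr (A i) h \<in> G i" using h by (simp add: G_def)
    then show ?thesis using gs_gen[OF that] by blast
  qed
  then obtain m where m: "\<And>i. i < k \<Longrightarrow> restr (A i) h = gs i ^^ m i" by metis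
  define r :: "'q mod_ring vec" where "r = vec k (\<lambda>i. of_nat (m i mod p))"
  have E: "nat (to_int_mod_ring (r $ i)) = m i mod p" if "i < k" for i
  proof -
    have "m i mod p < CARD('q)" using q p_gt1 by simp
    then show ?thesis using that to_int_of_nat[of "m i mod p", where 'q='q] by (simp add: r_def)
  qed
  have "h = prod_pows k gs r"
  proof
    fix x
    show "h x = prod_pows k gs r x"
    proof (cases "x \<in> {1..n}")
      case True
      then obtain i where i: "i < k" "x \<in> A i" using inside by blast
      have "prod_pows k gs r x = (gs i ^^ (m i mod p)) x" using pp_in[OF i, of r] E[OF i(1)] by simp
      also have "\<dots> = (gs i ^^ m i) x" using gs_period[OF i(1), of "m i"] by simp
      also have "\<dots> = restr (A i) h x" using m[OF i(1)] by simp
      also have "\<dots> = h x" using i(2) by (simp add: restr_def)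
      finally show ?thesis by simp
    next
      case False
      then have "h x = x" using permutes_not_in[OF H_perm[OF h]] by simp
      then show ?thesis using pp_out[OF False, of r] by simp
    qed
  qed
  moreover have "r \<in> carrier_vec k" by (simp add: r_def)
  ultimately show ?thesis by blast
qed

lemma gam_H:
  assumes q: "CARD('q::prime_card) = p" and h: "h \<in> H"
  shows "(gammap k gs h :: 'q mod_ring vec) \<in> carrier_vec k"
    and "prod_pows k gs (gammap k gs h :: 'q mod_ring vec) = h"
proof -
  obtain r :: "'q mod_ring vec" where r: "r \<in> carrier_vec k" "h = prod_pows k gs r"
    using H_pp[OF q h] by blast
  then have "gammap k gs h = r" using gammap_pp[OF q r(1)] by simp
  then show "(gammap k gs h :: 'q mod_ring vec) \<in> carrier_vec k"
    and "prod_pows k gs (gammap k gs h :: 'q mod_ring vec) = h" using r by simp_all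
qed

end

context blk begin

lemma nat_to_int_mult:
  fixes x :: "'q::prime_card mod_ring"
  assumes q: "CARD('q) = p" and c: "c < p"
  shows "nat (to_int_mod_ring (x * of_nat c)) = (nat (to_int_mod_ring x) * c) mod p"
proof -
  have "to_int_mod_ring (of_nat c :: 'q mod_ring) = int c" using to_int_of_nat[of c, where 'q='q] q c by simp
  then have "to_int_mod_ring (x * of_nat c) = (to_int_mod_ring x * int c) mod int p"
    using to_int_mod_ring_mult[of x "of_nat c"] q by simp
  also have "\<dots> = int ((nat (to_int_mod_ring x) * c) mod p)"
    using to_int_bounds[of x] by (simp add: of_nat_mod)
  finally show ?thesis by simp
qed

lemma conj_pp:
  fixes r :: "'q::prime_card mod_ring vec"
  assumes q: "CARD('q) = p" and r: "r \<in> carrier_vec k"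
    and b: "bij b" and bout: "\<forall>x. x \<notin> {1..n} \<longrightarrow> b x = x"
    and bin: "\<forall>i<k. \<forall>x\<in>A i. b x \<in> A i"
    and bc: "\<forall>i<k. \<forall>x\<in>A i. b (gs i x) = (gs i ^^ c i) (b x)"
    and c: "\<forall>i<k. c i < p"
  shows "conjp (prod_pows k gs r) b = prod_pows k gs (vec k (\<lambda>i. r $ i * of_nat (c i)))"
proof -
  let ?r' = "vec k (\<lambda>i. r $ i * of_nat (c i)) :: 'q mod_ring vec"
  have "b \<circ> prod_pows k gs r = prod_pows k gs ?r' \<circ> b"
  proof
    fix y
    show "(b \<circ> prod_pows k gs r) y = (prod_pows k gs ?r' \<circ> b) y"
    proof (cases "y \<in> {1..n}")
      case True
      then obtain i where i: "i < k" "y \<in> A i" using inside by blast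
      have bpow: "b ((gs i ^^ m) y) = (gs i ^^ (m * c i)) (b y)" for m
      proof (induction m)
        case 0
        then show ?case by simp
      next
        case (Suc m)
        have z: "(gs i ^^ m) y \<in> A i" using gs_pow_in[OF i] .
        have "b ((gs i ^^ Suc m) y) = b (gs i ((gs i ^^ m) y))" by simp
        also have "\<dots> = (gs i ^^ c i) (b ((gs i ^^ m) y))" using bc i(1) z by blast
        also have "\<dots> = (gs i ^^ c i) ((gs i ^^ (m * c i)) (b y))" using Suc by simp
        also have "\<dots> = (gs i ^^ (c i + m * c i)) (b y)" by (simp add: funpow_add)
        finally show ?case by simp
      qed
      let ?a = "nat (to_int_mod_ring (r $ i))"
      have "(b \<circ> prod_pows k gs r) y = b ((gs i ^^ ?a) y)" using pp_in[OF i, of r] by simp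
      also have "\<dots> = (gs i ^^ (?a * c i)) (b y)" by (rule bpow)
      also have "\<dots> = (gs i ^^ ((?a * c i) mod p)) (b y)" using gs_period[OF i(1), of "?a * c i"] by simp
      also have "\<dots> = (gs i ^^ nat (to_int_mod_ring (?r' $ i))) (b y)"
        using nat_to_int_mult[OF q, of "c i" "r $ i"] c i(1) by simp
      also have "\<dots> = prod_pows k gs ?r' (b y)" using pp_in[OF i(1), of "b y" ?r'] bin i by simp
      finally show ?thesis by simp
    next
      case False
      then show ?thesis using bout pp_out[OF False, of r] pp_out[OF False, of ?r'] by simp
    qed
  qed
  then show ?thesis using conjp_eq_iff[OF b] by blast
qed

definition sw :: "nat \<Rightarrow> nat \<Rightarrow> nat" where
  "sw j i = (if i = 0 then j else if i = j then 0 else i)"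

lemma ov_pp:
  fixes r :: "'q::prime_card mod_ring vec"
  assumes j: "1 \<le> j" "j < k"
  shows "conjp (prod_pows k gs r) (ov j) = prod_pows k gs (vec k (\<lambda>i. r $ sw j i))"
proof -
  let ?r' = "vec k (\<lambda>i. r $ sw j i) :: 'q mod_ring vec"
  let ?o = "ov j"
  have ob: "bij ?o" using ov_bij[OF j] .
  have gs0: "gs 0 = g1" by (simp add: gs_def)
  have gsj: "gs j ^^ m = conjp (g1 ^^ m) ?o" for m
    using j conjp_pow[OF ob, where f=g1 and m=m] by (simp add: gs_def)
  have gsj_app: "(gs j ^^ m) (?o z) = ?o ((g1 ^^ m) z)" for m z
    using gsj[of m] conjp_apply[OF ob] by simp
  have "?o \<circ> prod_pows k gs r = prod_pows k gs ?r' \<circ> ?o"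
  proof
    fix y
    show "(?o \<circ> prod_pows k gs r) y = (prod_pows k gs ?r' \<circ> ?o) y"
    proof (cases "y \<in> {1..n}")
      case False
      have "y \<notin> A 0" "y \<notin> A j" using outside[OF False] j k_pos by auto
      then have "?o y = y" using ov_facts(5)[OF j] by simp
      moreover have "prod_pows k gs r y = y" using pp_out[OF False] .
      moreover have "prod_pows k gs ?r' y = y" using pp_out[OF False] .
      ultimately show ?thesis by simp
    next
      case True
      then obtain i where i: "i < k" "y \<in> A i" using inside by blast
      show ?thesis
      proof (cases "i = 0")
        case True
        have y0: "y \<in> A 0" using i True by simp
        have oy: "?o y \<in> A j" using ov_facts(3)[OF j y0] .
        let ?a = "nat (to_int_mod_ring (r $ 0))"
        have "(?o \<circ> prod_pows k gs r) y = ?o ((g1 ^^ ?a) y)" using pp_in[OF k_pos y0, of r] gs0 by simp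
        also have "\<dots> = (gs j ^^ ?a) (?o y)" using gsj_app by simp
        also have "\<dots> = prod_pows k gs ?r' (?o y)" using pp_in[OF j(2) oy, of ?r'] j by (simp add: sw_def)
        finally show ?thesis by simp
      next
        case False
        note i0 = False
        show ?thesis
        proof (cases "i = j")
          case True
          have yj: "y \<in> A j" using i True by simp
          define w where "w = ?o y"
          have w0: "w \<in> A 0" using ov_facts(4)[OF j yj] w_def by simp
          have yw: "y = ?o w" using ov_facts(6)[OF j, of y] w_def by simp
          let ?a = "nat (to_int_mod_ring (r $ j))"
          have "(?o \<circ> prod_pows k gs r) y = ?o ((gs j ^^ ?a) y)" using pp_in[OF j(2) yj, of r] by simp
          also have "\<dots> = ?o ((gs j ^^ ?a) (?o w))" using yw by simp
          also have "\<dots> = (g1 ^^ ?a) w" using gsj_app ov_facts(6)[OF j] by simp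
          also have "\<dots> = prod_pows k gs ?r' w" using pp_in[OF k_pos w0, of ?r'] gs0 j k_pos
            by (simp add: sw_def)
          finally show ?thesis using w_def by simp
        next
          case False
          have n0: "y \<notin> A 0" using A_disj[OF i(1) k_pos i0 i(2)] .
          have nj: "y \<notin> A j" using A_disj[OF i(1) j(2) False i(2)] .
          have oy: "?o y = y" using ov_facts(5)[OF j n0 nj] .
          let ?a = "nat (to_int_mod_ring (r $ i))"
          have z: "(gs i ^^ ?a) y \<in> A i" using gs_pow_in[OF i] .
          have "(gs i ^^ ?a) y \<notin> A 0" using A_disj[OF i(1) k_pos i0 z] .
          moreover have "(gs i ^^ ?a) y \<notin> A j" using A_disj[OF i(1) j(2) False z] .
          ultimately have oz: "?o ((gs i ^^ ?a) y) = (gs i ^^ ?a) y" using ov_facts(5)[OF j] by simp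
          have "(?o \<circ> prod_pows k gs r) y = (gs i ^^ ?a) y" using pp_in[OF i, of r] oz by simp
          also have "\<dots> = prod_pows k gs ?r' y" using pp_in[OF i, of ?r'] i0 False i(1)
            by (simp add: sw_def)
          finally show ?thesis using oy by simp
        qed
      qed
    qed
  qed
  then show ?thesis using conjp_eq_iff[OF ob] by blast
qed

lemma goodK:
  assumes "\<kappa> \<in> gen_perm {ov j | j. 1 \<le> j \<and> j < k}"
  shows "bij \<kappa> \<and> \<kappa> permutes {1..n} \<and>
    (\<forall>r :: 'q::prime_card mod_ring vec. r \<in> carrier_vec k \<longrightarrow>
       (\<exists>r' \<in> carrier_vec k. conjp (prod_pows k gs r) (inv_into UNIV \<kappa>) = prod_pows k gs (r' :: 'q mod_ring vec)))"
  using assms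
proof (induction \<kappa> rule: gen_perm.induct)
  case gen_id
  have c: "conjp x (inv_into UNIV id) = x" for x by (simp add: conjp_def)
  show ?case
  proof (intro conjI allI impI)
    show "bij (id :: nat \<Rightarrow> nat)" by (rule bij_id)
    show "(id :: nat \<Rightarrow> nat) permutes {1..n}" by (rule permutes_id)
    fix r :: "'q mod_ring vec" assume "r \<in> carrier_vec k"
    then show "\<exists>r' \<in> carrier_vec k. conjp (prod_pows k gs r) (inv_into UNIV id) = prod_pows k gs (r' :: 'q mod_ring vec)"
      using c by blast
  qed
next
  case (gen_mult s g)
  obtain j where j: "1 \<le> j" "j < k" "s = ov j" using gen_mult.hyps(1) by blast
  have sb: "bij s" using ov_bij[OF j(1,2)] j(3) by simp
  have gb: "bij g" using gen_mult.IH by blast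
  have "s \<circ> g permutes {1..n}" using permutes_compose gen_mult.IH ov_perm[OF j(1,2)] j(3) by blast
  moreover have "bij (s \<circ> g)" using sb gb bij_comp by blast
  moreover have "\<exists>r' \<in> carrier_vec k. conjp (prod_pows k gs r) (inv_into UNIV (s \<circ> g)) = prod_pows k gs (r' :: 'q mod_ring vec)"
    if r: "r \<in> carrier_vec k" for r :: "'q mod_ring vec"
  proof -
    have "conjp (prod_pows k gs r) (inv_into UNIV (s \<circ> g))
        = conjp (conjp (prod_pows k gs r) (inv_into UNIV s)) (inv_into UNIV g)"
      using sb gb by (simp add: o_inv_distrib conjp_comp bij_imp_bij_inv)
    also have "\<dots> = conjp (prod_pows k gs (vec k (\<lambda>i. r $ sw j i))) (inv_into UNIV g)"
      using ov_inv[OF j(1,2)] ov_pp[OF j(1,2), of r] j(3) by simp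
    finally show ?thesis using gen_mult.IH by auto
  qed
  ultimately show ?case by blast
next
  case (gen_inv s g)
  obtain j where j: "1 \<le> j" "j < k" "s = ov j" using gen_inv.hyps(1) by blast
  have si: "inv_into UNIV s = s" using ov_inv[OF j(1,2)] j(3) by simp
  have sb: "bij s" using ov_bij[OF j(1,2)] j(3) by simp
  have gb: "bij g" using gen_inv.IH by blast
  have "s \<circ> g permutes {1..n}" using permutes_compose gen_inv.IH ov_perm[OF j(1,2)] j(3) by blast
  moreover have "bij (s \<circ> g)" using sb gb bij_comp by blast
  moreover have "\<exists>r' \<in> carrier_vec k. conjp (prod_pows k gs r) (inv_into UNIV (s \<circ> g)) = prod_pows k gs (r' :: 'q mod_ring vec)"
    if r: "r \<in> carrier_vec k" for r :: "'q mod_ring vec"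
  proof -
    have "conjp (prod_pows k gs r) (inv_into UNIV (s \<circ> g))
        = conjp (conjp (prod_pows k gs r) (inv_into UNIV s)) (inv_into UNIV g)"
      using sb gb by (simp add: o_inv_distrib conjp_comp bij_imp_bij_inv)
    also have "\<dots> = conjp (prod_pows k gs (vec k (\<lambda>i. r $ sw j i))) (inv_into UNIV g)"
      using ov_inv[OF j(1,2)] ov_pp[OF j(1,2), of r] j(3) by simp
    finally show ?thesis using gen_inv.IH by auto
  qed
  ultimately show ?case unfolding si by blast
qed

end

lemma cancel_mod_aux:
  fixes p a b c :: nat
  assumes "prime p" "0 < c" "c < p" "a \<le> b" "b < p" "(c * a) mod p = (c * b) mod p"
  shows "a = b"
proof -
  have le: "c * a \<le> c * b" using assms(4) by simp
  have "p dvd (c * b - c * a)" using mod_eq_dvd_iff_nat[OF le, of p] assms(6) by simp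
  then have "p dvd c * (b - a)" by (simp add: diff_mult_distrib2)
  then have "p dvd c \<or> p dvd (b - a)" using prime_dvd_mult_iff[OF assms(1)] by simp
  moreover have "\<not> p dvd c" using assms(2,3) nat_dvd_not_less by blast
  ultimately have "p dvd (b - a)" by simp
  moreover have "b - a < p" using assms(5) by simp
  ultimately have "b - a = 0" using nat_dvd_not_less by (metis gr0I)
  then show ?thesis using assms(4) by simp
qed

lemma cancel_mod:
  fixes p a b c :: nat
  assumes "prime p" "0 < c" "c < p" "a < p" "b < p" "(c * a) mod p = (c * b) mod p"
  shows "a = b"
proof (cases "a \<le> b")
  case True
  show ?thesis using cancel_mod_aux[OF assms(1,2,3) True assms(5,6)] by simp
next
  case False
  then have "b \<le> a" by simp
  then show ?thesis using cancel_mod_aux[OF assms(1,2,3) _ assms(4)] assms(6) by metis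
qed

context blk begin

definition goodB :: "(nat \<Rightarrow> nat) \<Rightarrow> bool" where
  "goodB b \<longleftrightarrow> bij b \<and> (\<forall>x. x \<notin> {1..n} \<longrightarrow> b x = x) \<and> (\<forall>i<k. \<forall>x\<in>A i. b x \<in> A i) \<and>
     (\<forall>i<k. (\<lambda>h. conjp h b) ` G i = G i)"

definition SB :: "(nat \<Rightarrow> nat) set" where
  "SB = (\<Union>i<k. {\<sigma>. \<sigma> permutes A i \<and> (\<lambda>g. conjp g \<sigma>) ` G i = G i})"

lemma conj_fix:
  assumes s: "bij s" and i: "i < k" and fx: "\<forall>x\<in>A i. s x = x" and h: "h \<in> G i"
  shows "conjp h s = h"
proof -
  have "s \<circ> h = h \<circ> s"
  proof
    fix x
    show "(s \<circ> h) x = (h \<circ> s) x"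
    proof (cases "x \<in> A i")
      case True
      then show ?thesis using fx G_in[OF i h True] by simp
    next
      case False
      have hx: "h x = x" using G_out[OF i h False] .
      have "s x \<notin> A i"
      proof
        assume sx: "s x \<in> A i"
        then have "s (s x) = s x" using fx by simp
        then have "s x = x" using s by (simp add: bij_is_inj inj_eq)
        then show False using sx False by simp
      qed
      then have "h (s x) = s x" using G_out[OF i h] by simp
      then show ?thesis using hx by simp
    qed
  qed
  then show ?thesis using conjp_eq_iff[OF s] by blast
qed

lemma S_inv:
  assumes i: "i < k" and s: "s permutes A i" and n: "(\<lambda>g. conjp g s) ` G i = G i"
  shows "inv_into UNIV s permutes A i" "(\<lambda>g. conjp g (inv_into UNIV s)) ` G i = G i"
proof -
  show "inv_into UNIV s permutes A i" using permutes_inv[OF s] .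
  have b: "bij s" using permutes_bij[OF s] .
  have "(\<lambda>g. conjp g (inv_into UNIV s)) ` G i = (\<lambda>g. conjp g (inv_into UNIV s)) ` ((\<lambda>g. conjp g s) ` G i)"
    using n by simp
  also have "\<dots> = G i" using conjp_inv1[OF b] by (simp add: image_image)
  finally show "(\<lambda>g. conjp g (inv_into UNIV s)) ` G i = G i" .
qed

lemma goodB_step:
  assumes i0: "i0 < k" and s: "s permutes A i0" and n: "(\<lambda>g. conjp g s) ` G i0 = G i0"
    and g: "goodB g"
  shows "goodB (s \<circ> g)"
  unfolding goodB_def
proof (intro conjI allI impI ballI)
  have sb: "bij s" using permutes_bij[OF s] .
  have gb: "bij g" using g by (simp add: goodB_def)
  show "bij (s \<circ> g)" using sb gb by (rule bij_comp[rotated])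
  fix x assume x: "x \<notin> {1..n}"
  then have "g x = x" using g by (simp add: goodB_def)
  moreover have "x \<notin> A i0" using outside[OF x i0] .
  ultimately show "(s \<circ> g) x = x" using permutes_not_in[OF s] by simp
next
  fix i x assume i: "i < k" and x: "x \<in> A i"
  have gx: "g x \<in> A i" using g i x by (simp add: goodB_def)
  show "(s \<circ> g) x \<in> A i"
  proof (cases "i = i0")
    case True
    then show ?thesis using permutes_in_image[OF s, of "g x"] gx by simp
  next
    case False
    then have "g x \<notin> A i0" using A_disj[OF i i0 False gx] by simp
    then show ?thesis using permutes_not_in[OF s] gx by simp
  qed
next
  fix i assume i: "i < k"
  have sb: "bij s" using permutes_bij[OF s] .
  have gb: "bij g" using g by (simp add: goodB_def)
  have gi: "(\<lambda>h. conjp h g) ` G i = G i" using g i by (simp add: goodB_def)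
  have "(\<lambda>h. conjp h (s \<circ> g)) ` G i = (\<lambda>h. conjp h s) ` ((\<lambda>h. conjp h g) ` G i)"
    using conjp_comp[OF sb gb] by (simp add: image_image)
  also have "\<dots> = (\<lambda>h. conjp h s) ` G i" using gi by simp
  also have "\<dots> = G i"
  proof (cases "i = i0")
    case True
    then show ?thesis using n by simp
  next
    case False
    have fx: "\<forall>x\<in>A i. s x = x"
    proof
      fix x assume "x \<in> A i"
      then have "x \<notin> A i0" using A_disj[OF i i0 False] by simp
      then show "s x = x" using permutes_not_in[OF s] by simp
    qed
    have "(\<lambda>h. conjp h s) ` G i = (\<lambda>h. h) ` G i"
      by (rule image_cong[OF refl]) (rule conj_fix[OF sb i fx])
    then show ?thesis by simp
  qed
  finally show "(\<lambda>h. conjp h (s \<circ> g)) ` G i = G i" .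
qed

lemma goodB_id: "goodB id"
  unfolding goodB_def
proof (intro conjI allI impI ballI)
  show "bij (id :: nat \<Rightarrow> nat)" by (rule bij_id)
  fix x :: nat show "id x = x" by simp
next
  fix i x assume "x \<in> A i" then show "id x \<in> A i" by simp
next
  fix i
  have "conjp h id = h" for h by (simp add: conjp_def)
  then show "(\<lambda>h. conjp h id) ` G i = G i" by simp
qed

lemma goodB_gen: "b \<in> gen_perm SB \<Longrightarrow> goodB b"
proof (induction b rule: gen_perm.induct)
  case gen_id
  then show ?case by (rule goodB_id)
next
  case (gen_mult s g)
  then obtain i where "i < k" "s permutes A i" "(\<lambda>g. conjp g s) ` G i = G i" by (auto simp: SB_def)
  then show ?case using goodB_step gen_mult.IH by blast
next
  case (gen_inv s g)
  then obtain i where i: "i < k" "s permutes A i" "(\<lambda>g. conjp g s) ` G i = G i" by (auto simp: SB_def)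
  show ?case using goodB_step[OF i(1) S_inv[OF i] gen_inv.IH] .
qed

lemma goodB_c:
  assumes g: "goodB b" and i: "i < k"
  shows "\<exists>c. 0 < c \<and> c < p \<and> (\<forall>x\<in>A i. b (gs i x) = (gs i ^^ c) (b x))"
proof -
  have bb: "bij b" using g by (simp add: goodB_def)
  have "(\<lambda>h. conjp h b) ` G i = G i" using g i by (simp add: goodB_def)
  then have "conjp (gs i) b \<in> G i" using gs_G[OF i] by blast
  then obtain m where m: "conjp (gs i) b = gs i ^^ m" using gs_gen[OF i] by blast
  define c where "c = m mod p"
  have cm: "conjp (gs i) b = gs i ^^ c" using m gs_period[OF i, of m] c_def by simp
  have "c \<noteq> 0"
  proof
    assume "c = 0"
    then have "conjp (gs i) b = conjp id b" using cm conjp_idp[OF bb] by simp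
    then show False using injD[OF conjp_inj[OF bb]] gs_neq_id[OF i] by blast
  qed
  moreover have "c < p" using p_gt1 c_def by simp
  moreover have "\<forall>x\<in>A i. b (gs i x) = (gs i ^^ c) (b x)"
  proof
    fix x
    have "b \<circ> gs i = (gs i ^^ c) \<circ> b" using cm conjp_eq_iff[OF bb] by blast
    then show "b (gs i x) = (gs i ^^ c) (b x)" by (metis comp_apply)
  qed
  ultimately show ?thesis by blast
qed

end

context blk begin

lemma sigma_exists:
  assumes i: "i < k" and c: "0 < c" "c < p"
  shows "\<exists>\<sigma>. \<sigma> permutes A i \<and> (\<lambda>g. conjp g \<sigma>) ` G i = G i \<and>
             (\<forall>x\<in>A i. \<sigma> (gs i x) = (gs i ^^ c) (\<sigma> x))"
proof -
  obtain a0 where a0: "a0 \<in> A i" using A_ne[OF i] by blast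
  let ?g = "gs i"
  let ?o = "\<lambda>m. (?g ^^ m) a0"
  have per: "?o a = ?o b" if "a mod p = b mod p" for a b
    using gs_period[OF i, of a] gs_period[OF i, of b] that by simp
  have sub: "A i \<subseteq> ?o ` {..<p}"
  proof
    fix x assume x: "x \<in> A i"
    have "x \<in> {h a0 | h. h \<in> H}" using orbits i a0 x by blast
    then obtain h where h: "h \<in> H" "x = h a0" by blast
    have "restr (A i) h \<in> G i" using h(1) by (simp add: G_def)
    then obtain m where m: "restr (A i) h = ?g ^^ m" using gs_gen[OF i] by blast
    have "x = ?o m" using h(2) m a0 by (metis restr_def)
    also have "\<dots> = ?o (m mod p)" using per[of m "m mod p"] by simp
    finally show "x \<in> ?o ` {..<p}" using p_gt1 by simp
  qed
  have sup: "?o ` {..<p} \<subseteq> A i" using gs_pow_in[OF i a0] by blast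
  have Aeq: "?o ` {..<p} = A i" using sub sup by blast
  have inj: "inj_on ?o {..<p}"
    by (rule eq_card_imp_inj_on) (use Aeq cardA i in auto)
  have uniq: "a = b" if "a < p" "b < p" "?o a = ?o b" for a b
    using inj_onD[OF inj that(3)] that(1,2) by simp
  have ex1: "\<exists>!m. m < p \<and> ?o m = x" if xA: "x \<in> A i" for x
  proof -
    have "x \<in> ?o ` {..<p}" using xA Aeq by simp
    then obtain m where "m < p" "?o m = x" by auto
    then show ?thesis using uniq by blast
  qed
  define idx where "idx x = (THE m. m < p \<and> ?o m = x)" for x
  have idx: "idx x < p \<and> ?o (idx x) = x" if "x \<in> A i" for x
    using theI'[OF ex1[OF that]] idx_def by simp
  have idx_eq: "idx x = m" if "x \<in> A i" "m < p" "?o m = x" for x m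
    using uniq[of "idx x" m] idx[OF that(1)] that by simp
  define \<sigma> where "\<sigma> x = (if x \<in> A i then ?o (c * idx x) else x)" for x
  have comm: "\<sigma> (?g x) = (?g ^^ c) (\<sigma> x)" if x: "x \<in> A i" for x
  proof -
    define m where "m = idx x"
    have m: "m < p" "?o m = x" using idx[OF x] m_def by auto
    have gx: "?g x \<in> A i" using gs_pow_in[OF i x, of 1] by simp
    have "?o (Suc m) = ?g x" using m(2) by auto
    moreover have "?o (Suc m mod p) = ?o (Suc m)" using per[of "Suc m mod p" "Suc m"] by simp
    moreover have "Suc m mod p < p" using p_gt1 by simp
    ultimately have im: "idx (?g x) = Suc m mod p" using idx_eq[OF gx] by simp
    have "\<sigma> (?g x) = ?o (c * (Suc m mod p))" using gx im by (simp add: \<sigma>_def)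
    also have "\<dots> = ?o (c * Suc m)" by (rule per) (simp add: mod_mult_right_eq)
    also have "\<dots> = ?o (c + c * m)" by simp
    also have "\<dots> = (?g ^^ c) (?o (c * m))" by (simp add: funpow_add)
    also have "\<dots> = (?g ^^ c) (\<sigma> x)" using x m_def by (simp add: \<sigma>_def)
    finally show ?thesis .
  qed
  have into: "\<sigma> ` A i \<subseteq> A i" using gs_pow_in[OF i a0] by (auto simp: \<sigma>_def)
  have injs: "inj_on \<sigma> (A i)"
  proof (rule inj_onI)
    fix x y assume x: "x \<in> A i" and y: "y \<in> A i" and e: "\<sigma> x = \<sigma> y"
    have "?o (c * idx x) = ?o (c * idx y)" using e x y by (simp add: \<sigma>_def)
    then have "?o ((c * idx x) mod p) = ?o ((c * idx y) mod p)"
      using per[of "(c * idx x) mod p" "c * idx x"] per[of "(c * idx y) mod p" "c * idx y"] by simp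
    then have "(c * idx x) mod p = (c * idx y) mod p" using uniq p_gt1 by simp
    then have "idx x = idx y" using cancel_mod[OF p_prime c] idx[OF x] idx[OF y] by blast
    then show "x = y" using idx[OF x] idx[OF y] by metis
  qed
  have img: "\<sigma> ` A i = A i" using endo_inj_surj[OF A_fin[OF i] into injs] .
  have sp: "\<sigma> permutes A i"
  proof (rule bij_imp_permutes)
    show "bij_betw \<sigma> (A i) (A i)" using injs img by (simp add: bij_betw_def)
    show "\<And>x. x \<notin> A i \<Longrightarrow> \<sigma> x = x" by (simp add: \<sigma>_def)
  qed
  have sb: "bij \<sigma>" using permutes_bij[OF sp] .
  have cg: "conjp ?g \<sigma> = ?g ^^ c"
  proof -
    have "\<sigma> \<circ> ?g = (?g ^^ c) \<circ> \<sigma>"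
    proof
      fix x
      show "(\<sigma> \<circ> ?g) x = ((?g ^^ c) \<circ> \<sigma>) x"
      proof (cases "x \<in> A i")
        case True
        then show ?thesis using comm by simp
      next
        case False
        have "?g x = x" using gs_pow_out[OF i False, of 1] by simp
        moreover have "\<sigma> x = x" using False by (simp add: \<sigma>_def)
        moreover have "(?g ^^ c) x = x" using gs_pow_out[OF i False] .
        ultimately show ?thesis by simp
      qed
    qed
    then show ?thesis using conjp_eq_iff[OF sb] by blast
  qed
  have "(\<lambda>h. conjp h \<sigma>) ` G i \<subseteq> G i"
  proof
    fix h assume "h \<in> (\<lambda>h. conjp h \<sigma>) ` G i"
    then obtain h0 where h0: "h0 \<in> G i" "h = conjp h0 \<sigma>" by blast
    then obtain m where "h0 = ?g ^^ m" using gs_gen[OF i] by blast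
    then have "h = conjp (?g ^^ m) \<sigma>" using h0 by simp
    then have "h = ?g ^^ (c * m)" using conjp_pow[OF sb] cg by (simp add: funpow_mult)
    then show "h \<in> G i" using gs_pow_G[OF i] by simp
  qed
  then have "(\<lambda>h. conjp h \<sigma>) ` G i = G i"
    using endo_inj_surj[OF G_fin[OF i]] conjp_inj[OF sb] inj_on_subset by blast
  then show ?thesis using sp comm by blast
qed

lemma foldr_SB:
  assumes "set xs \<subseteq> {..<k}" and "\<forall>i<k. \<sigma> i \<in> SB"
  shows "foldr (\<lambda>i f. f \<circ> \<sigma> i) xs id \<in> gen_perm SB"
  using assms
proof (induction xs)
  case Nil
  then show ?case using gen_perm.gen_id[unfolded id_def] by simp
next
  case (Cons j xs)
  have IH: "foldr (\<lambda>i f. f \<circ> \<sigma> i) xs id \<in> gen_perm SB"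
    by (rule Cons.IH) (use Cons.prems in auto)
  have sj: "\<sigma> j \<in> gen_perm SB" using Cons.prems gen_perm_gen by simp
  have e: "foldr (\<lambda>i f. f \<circ> \<sigma> i) (j # xs) id = foldr (\<lambda>i f. f \<circ> \<sigma> i) xs id \<circ> \<sigma> j" by simp
  show ?case unfolding e by (rule gen_perm_comp[OF IH sj])
qed

lemma b_exists:
  assumes c: "\<forall>i<k. 0 < c i \<and> c i < p"
  shows "\<exists>b\<in>gen_perm SB. goodB b \<and> (\<forall>i<k. \<forall>x\<in>A i. b (gs i x) = (gs i ^^ c i) (b x))"
proof -
  have "\<forall>i<k. \<exists>\<sigma>. \<sigma> permutes A i \<and> (\<lambda>g. conjp g \<sigma>) ` G i = G i \<and>
             (\<forall>x\<in>A i. \<sigma> (gs i x) = (gs i ^^ c i) (\<sigma> x))"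
    using sigma_exists c by blast
  then obtain \<sigma>0 where s0: "\<And>i. i < k \<Longrightarrow> \<sigma>0 i permutes A i \<and> (\<lambda>g. conjp g (\<sigma>0 i)) ` G i = G i \<and>
             (\<forall>x\<in>A i. \<sigma>0 i (gs i x) = (gs i ^^ c i) (\<sigma>0 i x))" by metis
  define \<sigma> where "\<sigma> i = (if i < k then \<sigma>0 i else id)" for i
  have sS: "\<forall>i<k. \<sigma> i \<in> SB" using s0 by (auto simp: SB_def \<sigma>_def)
  define b where "b = foldr (\<lambda>i f. f \<circ> \<sigma> i) [0..<k] id"
  have bB: "b \<in> gen_perm SB" unfolding b_def by (rule foldr_SB) (use sS in auto)
  have gb: "goodB b" using goodB_gen[OF bB] .
  have F1: "\<forall>i\<in>set [0..<k]. \<forall>x. x \<notin> A i \<longrightarrow> \<sigma> i x = x"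
  proof (intro ballI allI impI)
    fix i x assume "i \<in> set [0..<k]" "x \<notin> A i"
    then show "\<sigma> i x = x" using s0[of i] permutes_not_in[of "\<sigma>0 i" "A i" x] by (simp add: \<sigma>_def)
  qed
  have F2: "\<forall>i\<in>set [0..<k]. \<forall>x\<in>A i. \<sigma> i x \<in> A i"
  proof (intro ballI)
    fix i x assume "i \<in> set [0..<k]" "x \<in> A i"
    then show "\<sigma> i x \<in> A i" using s0[of i] permutes_in_image[of "\<sigma>0 i" "A i" x] by (simp add: \<sigma>_def)
  qed
  have fa: "(\<forall>i\<in>set [0..<k]. \<forall>x\<in>A i. b x = \<sigma> i x)"
  proof -
    have d: "distinct [0..<k]" by simp
    have sk: "set [0..<k] \<subseteq> {..<k}" by auto
    show ?thesis using foldr_apply[OF d sk F1 F2] unfolding b_def by blast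
  qed
  have "\<forall>i<k. \<forall>x\<in>A i. b (gs i x) = (gs i ^^ c i) (b x)"
  proof (intro allI impI ballI)
    fix i x assume i: "i < k" and x: "x \<in> A i"
    have gx: "gs i x \<in> A i" using gs_pow_in[OF i x, of 1] by simp
    have "b (gs i x) = \<sigma> i (gs i x)" using fa i gx by simp
    also have "\<dots> = (gs i ^^ c i) (\<sigma> i x)" using s0[OF i] x by (simp add: \<sigma>_def i)
    also have "\<dots> = (gs i ^^ c i) (b x)" using fa i x by simp
    finally show "b (gs i x) = (gs i ^^ c i) (b x)" .
  qed
  then show ?thesis using bB gb by blast
qed

end

context blk begin

lemma diag_equiv:
  fixes dd :: "nat \<Rightarrow> 'q::prime_card mod_ring" and \<kappa> b :: "nat \<Rightarrow> nat"
  assumes q: "CARD('q) = p"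
    and Kc: "\<forall>r :: 'q mod_ring vec. r \<in> carrier_vec k \<longrightarrow>
       (\<exists>r' \<in> carrier_vec k. conjp (prod_pows k gs r) (inv_into UNIV \<kappa>) = prod_pows k gs (r' :: 'q mod_ring vec))"
    and hb: "\<forall>h\<in>H. conjp h b = prod_pows k gs (vec k (\<lambda>i. (gammap k gs h :: 'q mod_ring vec) $ i * dd i))"
  shows "((\<lambda>h. conjp h b) ` H = (\<lambda>h. conjp h (inv_into UNIV \<kappa>)) ` H) \<longleftrightarrow>
         ((gammap k gs :: _ \<Rightarrow> 'q mod_ring vec) ` ((\<lambda>h. conjp h (inv_into UNIV \<kappa>)) ` H) =
          (\<lambda>v. vec k (\<lambda>i. v $ i * dd i)) ` ((gammap k gs :: _ \<Rightarrow> 'q mod_ring vec) ` H))"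
proof -
  let ?H' = "(\<lambda>h. conjp h (inv_into UNIV \<kappa>)) ` H"
  let ?g = "gammap k gs :: _ \<Rightarrow> 'q mod_ring vec"
  let ?sc = "\<lambda>v :: 'q mod_ring vec. vec k (\<lambda>i. v $ i * dd i)"
  have H'pp: "?g h' \<in> carrier_vec k \<and> prod_pows k gs (?g h') = h'" if h': "h' \<in> ?H'" for h'
  proof -
    obtain h where h: "h \<in> H" "h' = conjp h (inv_into UNIV \<kappa>)" using h' by blast
    have "h = prod_pows k gs (?g h)" using gam_H(2)[OF q h(1)] by simp
    moreover have "?g h \<in> carrier_vec k" using gam_H(1)[OF q h(1)] .
    ultimately obtain r' :: "'q mod_ring vec" where r': "r' \<in> carrier_vec k" "h' = prod_pows k gs r'"
      using Kc h(2) by metis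
    then show ?thesis using gammap_pp[OF q r'(1)] by simp
  qed
  have gb: "?g (conjp h b) = ?sc (?g h)" if "h \<in> H" for h
    using hb that gammap_pp[OF q, of "?sc (?g h)"] by simp
  show ?thesis
  proof
    assume e: "(\<lambda>h. conjp h b) ` H = ?H'"
    have "?g ` ?H' = ?g ` ((\<lambda>h. conjp h b) ` H)" using e by simp
    also have "\<dots> = ?sc ` (?g ` H)" using gb by (auto simp: image_iff)
    finally show "?g ` ?H' = ?sc ` (?g ` H)" .
  next
    assume e: "?g ` ?H' = ?sc ` (?g ` H)"
    show "(\<lambda>h. conjp h b) ` H = ?H'"
    proof
      show "(\<lambda>h. conjp h b) ` H \<subseteq> ?H'"
      proof
        fix x assume "x \<in> (\<lambda>h. conjp h b) ` H"
        then obtain h where h: "h \<in> H" "x = conjp h b" by blast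
        have "?sc (?g h) \<in> ?g ` ?H'" using e h(1) by blast
        then obtain h' where h': "h' \<in> ?H'" "?sc (?g h) = ?g h'" by blast
        have "x = prod_pows k gs (?sc (?g h))" using hb h by simp
        also have "\<dots> = h'" using h'(2) H'pp[OF h'(1)] by simp
        finally show "x \<in> ?H'" using h'(1) by simp
      qed
      show "?H' \<subseteq> (\<lambda>h. conjp h b) ` H"
      proof
        fix h' assume h': "h' \<in> ?H'"
        have "?g h' \<in> ?sc ` (?g ` H)" using e h' by blast
        then obtain h where h: "h \<in> H" "?g h' = ?sc (?g h)" by blast
        have "h' = prod_pows k gs (?g h')" using H'pp[OF h'] by simp
        also have "\<dots> = conjp h b" using h hb by simp
        finally show "h' \<in> (\<lambda>h. conjp h b) ` H" using h(1) by blast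
      qed
    qed
  qed
qed

lemma norm_equiv:
  assumes kb: "bij \<kappa>" and bb: "bij b"
  shows "((\<lambda>h. conjp h (\<kappa> \<circ> b)) ` H = H) \<longleftrightarrow>
         ((\<lambda>h. conjp h b) ` H = (\<lambda>h. conjp h (inv_into UNIV \<kappa>)) ` H)"
proof -
  have img: "(\<lambda>h. conjp h (\<kappa> \<circ> b)) ` H = (\<lambda>h. conjp h \<kappa>) ` ((\<lambda>h. conjp h b) ` H)"
    using conjp_comp[OF kb bb] by (simp add: image_image)
  show ?thesis
  proof
    assume "(\<lambda>h. conjp h (\<kappa> \<circ> b)) ` H = H"
    then have e: "(\<lambda>h. conjp h \<kappa>) ` ((\<lambda>h. conjp h b) ` H) = H" using img by simp
    have "(\<lambda>h. conjp h b) ` H = (\<lambda>h. conjp h (inv_into UNIV \<kappa>)) ` ((\<lambda>h. conjp h \<kappa>) ` ((\<lambda>h. conjp h b) ` H))"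
      using conjp_inv1[OF kb] by (simp add: image_image)
    also have "\<dots> = (\<lambda>h. conjp h (inv_into UNIV \<kappa>)) ` H" using e by simp
    finally show "(\<lambda>h. conjp h b) ` H = (\<lambda>h. conjp h (inv_into UNIV \<kappa>)) ` H" .
  next
    assume e: "(\<lambda>h. conjp h b) ` H = (\<lambda>h. conjp h (inv_into UNIV \<kappa>)) ` H"
    have "(\<lambda>h. conjp h (\<kappa> \<circ> b)) ` H = (\<lambda>h. conjp h \<kappa>) ` ((\<lambda>h. conjp h (inv_into UNIV \<kappa>)) ` H)"
      using img e by simp
    also have "\<dots> = H" using conjp_inv2[OF kb] by (simp add: image_image)
    finally show "(\<lambda>h. conjp h (\<kappa> \<circ> b)) ` H = H" .
  qed
qed

lemma goodB_perm: "goodB b \<Longrightarrow> b permutes {1..n}"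
  unfolding goodB_def using bij_fix_permutes by blast

theorem group_main:
  fixes \<kappa> :: "nat \<Rightarrow> nat"
  assumes q: "CARD('q::prime_card) = p"
    and kap: "\<kappa> \<in> gen_perm {ov j | j. 1 \<le> j \<and> j < k}"
  shows "(\<exists>b\<in>gen_perm SB. \<kappa> \<circ> b \<in> normaliser (Sn n) H) \<longleftrightarrow>
         (\<exists>dd :: nat \<Rightarrow> 'q mod_ring. (\<forall>i<k. dd i \<noteq> 0) \<and>
           (gammap k gs :: _ \<Rightarrow> 'q mod_ring vec) ` ((\<lambda>h. conjp h (inv_into UNIV \<kappa>)) ` H) =
           (\<lambda>v. vec k (\<lambda>i. v $ i * dd i)) ` ((gammap k gs :: _ \<Rightarrow> 'q mod_ring vec) ` H))"
proof -
  let ?g = "gammap k gs :: _ \<Rightarrow> 'q mod_ring vec"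
  have K: "bij \<kappa> \<and> \<kappa> permutes {1..n} \<and>
    (\<forall>r :: 'q mod_ring vec. r \<in> carrier_vec k \<longrightarrow>
       (\<exists>r' \<in> carrier_vec k. conjp (prod_pows k gs r) (inv_into UNIV \<kappa>) = prod_pows k gs (r' :: 'q mod_ring vec)))"
    using goodK[OF kap] by blast
  have kb: "bij \<kappa>" and kp: "\<kappa> permutes {1..n}" using K by auto
  have Kc: "\<forall>r :: 'q mod_ring vec. r \<in> carrier_vec k \<longrightarrow>
       (\<exists>r' \<in> carrier_vec k. conjp (prod_pows k gs r) (inv_into UNIV \<kappa>) = prod_pows k gs (r' :: 'q mod_ring vec))"
    using K by blast
  have hb_of: "\<forall>h\<in>H. conjp h b = prod_pows k gs (vec k (\<lambda>i. ?g h $ i * of_nat (c i)))"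
    if gb: "goodB b" and cc: "\<forall>i<k. c i < p" and comm: "\<forall>i<k. \<forall>x\<in>A i. b (gs i x) = (gs i ^^ c i) (b x)"
    for b c
  proof
    fix h assume h: "h \<in> H"
    have "conjp h b = conjp (prod_pows k gs (?g h)) b" using gam_H(2)[OF q h] by simp
    also have "\<dots> = prod_pows k gs (vec k (\<lambda>i. ?g h $ i * of_nat (c i)))"
      by (rule conj_pp[OF q gam_H(1)[OF q h]]) (use gb cc comm in \<open>auto simp: goodB_def\<close>)
    finally show "conjp h b = prod_pows k gs (vec k (\<lambda>i. ?g h $ i * of_nat (c i)))" .
  qed
  show ?thesis
  proof
    assume "\<exists>b\<in>gen_perm SB. \<kappa> \<circ> b \<in> normaliser (Sn n) H"
    then obtain b where bB: "b \<in> gen_perm SB" and nb: "\<kappa> \<circ> b \<in> normaliser (Sn n) H" by blast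
    have gb: "goodB b" using goodB_gen[OF bB] .
    have bb: "bij b" using gb by (simp add: goodB_def)
    have "\<forall>i<k. \<exists>c. 0 < c \<and> c < p \<and> (\<forall>x\<in>A i. b (gs i x) = (gs i ^^ c) (b x))"
      using goodB_c[OF gb] by blast
    then obtain c where c: "\<And>i. i < k \<Longrightarrow> 0 < c i \<and> c i < p \<and> (\<forall>x\<in>A i. b (gs i x) = (gs i ^^ c i) (b x))"
      by metis
    have hb: "\<forall>h\<in>H. conjp h b = prod_pows k gs (vec k (\<lambda>i. ?g h $ i * of_nat (c i)))"
      by (rule hb_of[OF gb]) (use c in auto)
    have "(\<lambda>h. conjp h (\<kappa> \<circ> b)) ` H = H" using nb by (simp add: normaliser_def)
    then have "(\<lambda>h. conjp h b) ` H = (\<lambda>h. conjp h (inv_into UNIV \<kappa>)) ` H"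
      using norm_equiv[OF kb bb] by simp
    then have V: "?g ` ((\<lambda>h. conjp h (inv_into UNIV \<kappa>)) ` H) =
          (\<lambda>v. vec k (\<lambda>i. v $ i * of_nat (c i))) ` (?g ` H)"
      using diag_equiv[OF q Kc hb] by simp
    have nz: "\<forall>i<k. (of_nat (c i) :: 'q mod_ring) \<noteq> 0"
    proof (intro allI impI)
      fix i assume i: "i < k"
      have "to_int_mod_ring (of_nat (c i) :: 'q mod_ring) = int (c i)"
        using to_int_of_nat[of "c i", where 'q='q] c[OF i] q by simp
      then show "(of_nat (c i) :: 'q mod_ring) \<noteq> 0" using c[OF i] by auto
    qed
    then show "\<exists>dd :: nat \<Rightarrow> 'q mod_ring. (\<forall>i<k. dd i \<noteq> 0) \<and>
           ?g ` ((\<lambda>h. conjp h (inv_into UNIV \<kappa>)) ` H) = (\<lambda>v. vec k (\<lambda>i. v $ i * dd i)) ` (?g ` H)"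
      using nz V by (intro exI[of _ "\<lambda>i. of_nat (c i)"] conjI) simp_all
  next
    assume "\<exists>dd :: nat \<Rightarrow> 'q mod_ring. (\<forall>i<k. dd i \<noteq> 0) \<and>
           ?g ` ((\<lambda>h. conjp h (inv_into UNIV \<kappa>)) ` H) = (\<lambda>v. vec k (\<lambda>i. v $ i * dd i)) ` (?g ` H)"
    then obtain dd :: "nat \<Rightarrow> 'q mod_ring" where dd: "\<forall>i<k. dd i \<noteq> 0"
      and V: "?g ` ((\<lambda>h. conjp h (inv_into UNIV \<kappa>)) ` H) = (\<lambda>v. vec k (\<lambda>i. v $ i * dd i)) ` (?g ` H)"
      by blast
    define c where "c i = nat (to_int_mod_ring (dd i))" for i
    have cdd: "(of_nat (c i) :: 'q mod_ring) = dd i" for i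
      unfolding c_def using to_int_bounds[of "dd i"]
      by (simp add: of_nat_of_int_mod_ring)
    have cb: "0 < c i \<and> c i < p" if "i < k" for i
    proof -
      have "c i < p" using to_int_bounds[of "dd i"] q by (simp add: c_def)
      moreover have "c i \<noteq> 0"
      proof
        assume "c i = 0"
        then have "dd i = 0" using cdd[of i] by simp
        then show False using dd that by simp
      qed
      ultimately show ?thesis by simp
    qed
    obtain b where bB: "b \<in> gen_perm SB" and gb: "goodB b"
      and comm: "\<forall>i<k. \<forall>x\<in>A i. b (gs i x) = (gs i ^^ c i) (b x)"
      using b_exists[of c] cb by blast
    have bb: "bij b" using gb by (simp add: goodB_def)
    have hb0: "\<forall>h\<in>H. conjp h b = prod_pows k gs (vec k (\<lambda>i. ?g h $ i * of_nat (c i)))"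
      by (rule hb_of[OF gb _ comm]) (use cb in auto)
    have hb: "\<forall>h\<in>H. conjp h b = prod_pows k gs (vec k (\<lambda>i. ?g h $ i * dd i))"
      using hb0 cdd by simp
    have "(\<lambda>h. conjp h b) ` H = (\<lambda>h. conjp h (inv_into UNIV \<kappa>)) ` H"
      using diag_equiv[OF q Kc hb] V by simp
    then have "(\<lambda>h. conjp h (\<kappa> \<circ> b)) ` H = H" using norm_equiv[OF kb bb] by simp
    moreover have "\<kappa> \<circ> b permutes {1..n}" using permutes_compose[OF goodB_perm[OF gb] kp] .
    ultimately have "\<kappa> \<circ> b \<in> normaliser (Sn n) H" by (simp add: normaliser_def Sn_def)
    then show "\<exists>b\<in>gen_perm SB. \<kappa> \<circ> b \<in> normaliser (Sn n) H" using bB by blast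
  qed
qed

end

definition rs :: "'a::field mat \<Rightarrow> nat \<Rightarrow> 'a vec set" where
  "rs N s = {transpose_mat N *\<^sub>v c | c. c \<in> carrier_vec s}"

lemma rs_row:
  fixes N :: "'a::field mat"
  assumes N: "N \<in> carrier_mat s k" and i: "i < s"
  shows "transpose_mat N *\<^sub>v unit_vec s i = row N i"
proof (rule eq_vecI)
  show "dim_vec (transpose_mat N *\<^sub>v unit_vec s i) = dim_vec (row N i)" using N by simp
  fix j assume "j < dim_vec (row N i)"
  then have j: "j < k" using N by simp
  have "(transpose_mat N *\<^sub>v unit_vec s i) $ j = col N j \<bullet> unit_vec s i" using N j by simp
  also have "\<dots> = col N j $ i" by (rule scalar_prod_right_unit[OF i])
  also have "\<dots> = N $$ (i, j)" using N i j by simp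
  finally show "(transpose_mat N *\<^sub>v unit_vec s i) $ j = row N i $ j" using N i j by simp
qed

lemma rs_mult_row:
  fixes N X :: "'a::field mat"
  assumes N: "N \<in> carrier_mat s k" and X: "X \<in> carrier_mat s' s" and i: "i < s'"
  shows "transpose_mat N *\<^sub>v row X i = row (X * N) i"
proof (rule eq_vecI)
  show "dim_vec (transpose_mat N *\<^sub>v row X i) = dim_vec (row (X * N) i)" using N X by simp
  fix j assume "j < dim_vec (row (X * N) i)"
  then have j: "j < k" using N by simp
  have "(transpose_mat N *\<^sub>v row X i) $ j = col N j \<bullet> row X i" using N j by simp
  also have "\<dots> = row X i \<bullet> col N j"
    by (rule comm_scalar_prod[of _ s]) (use N X in \<open>auto simp: col_def row_def\<close>)
  also have "\<dots> = (X * N) $$ (i, j)" using N X i j by simp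
  finally show "(transpose_mat N *\<^sub>v row X i) $ j = row (X * N) i $ j" using N X i j by simp
qed

lemma span_factor:
  fixes N M' :: "'a::field mat"
  assumes N: "N \<in> carrier_mat s k" and M': "M' \<in> carrier_mat s k" and sub: "rs N s \<subseteq> rs M' s"
  shows "\<exists>P\<in>carrier_mat s s. N = P * M'"
proof -
  have "\<exists>c. c \<in> carrier_vec s \<and> transpose_mat M' *\<^sub>v c = row N i" if i: "i < s" for i
  proof -
    have "unit_vec s i \<in> carrier_vec s" by simp
    then have "row N i \<in> rs N s" unfolding rs_def
      by (intro CollectI exI[of _ "unit_vec s i"] conjI) (simp_all add: rs_row[OF N i])
    then have "row N i \<in> rs M' s" using sub by (rule rev_subsetD)
    then obtain c where "c \<in> carrier_vec s" "row N i = transpose_mat M' *\<^sub>v c"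
      unfolding rs_def by auto
    then show ?thesis by auto
  qed
  then obtain cc where cc: "\<And>i. i < s \<Longrightarrow> cc i \<in> carrier_vec s \<and> transpose_mat M' *\<^sub>v cc i = row N i"
    by metis
  define P where "P = mat s s (\<lambda>(i, j). cc i $ j)"
  have P: "P \<in> carrier_mat s s" by (simp add: P_def)
  have rowP: "row P i = cc i" if i: "i < s" for i
    using cc[OF i] i by (intro eq_vecI) (auto simp: P_def)
  have "N = P * M'"
  proof (rule eq_matI)
    show "dim_row N = dim_row (P * M')" "dim_col N = dim_col (P * M')" using N M' P by auto
    fix i j assume i: "i < dim_row (P * M')" and j: "j < dim_col (P * M')"
    then have i': "i < s" and j': "j < k" using P M' by auto
    have "row (P * M') i = transpose_mat M' *\<^sub>v row P i" using rs_mult_row[OF M' P i'] by simp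
    also have "\<dots> = row N i" using rowP[OF i'] cc[OF i'] by simp
    finally have "row (P * M') i $ j = row N i $ j" by simp
    then show "N $$ (i, j) = (P * M') $$ (i, j)" using N M' P i' j' by simp
  qed
  then show ?thesis using P by blast
qed

lemma vec_minus_zero:
  fixes a b :: "'a::field vec"
  assumes "a \<in> carrier_vec s" "b \<in> carrier_vec s" "a - b = 0\<^sub>v s"
  shows "a = b"
proof (rule eq_vecI)
  show "dim_vec a = dim_vec b" using assms by simp
  fix i assume "i < dim_vec b"
  then have i: "i < s" using assms by simp
  have h: "(a - b) $ i = (0\<^sub>v s) $ i" using assms(3) by (rule arg_cong)
  have z: "(0\<^sub>v s :: 'a vec) $ i = 0" using i by simp
  have d: "(a - b) $ i = a $ i - b $ i" using assms(2) i by simp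
  have "a $ i - b $ i = 0" using h z d by simp
  then show "a $ i = b $ i" by simp
qed

lemma indep_inj:
  fixes N :: "'a::field mat"
  assumes N: "N \<in> carrier_mat s k"
    and ind: "\<forall>c\<in>carrier_vec s. transpose_mat N *\<^sub>v c = 0\<^sub>v k \<longrightarrow> c = 0\<^sub>v s"
    and a: "a \<in> carrier_vec s" and b: "b \<in> carrier_vec s"
    and e: "transpose_mat N *\<^sub>v a = transpose_mat N *\<^sub>v b"
  shows "a = b"
proof -
  have NT: "transpose_mat N \<in> carrier_mat k s" using N by simp
  have "transpose_mat N *\<^sub>v (a - b) = transpose_mat N *\<^sub>v a - transpose_mat N *\<^sub>v b"
    using mult_minus_distrib_mat_vec[OF NT a b] .
  also have "\<dots> = 0\<^sub>v k" using e NT b by simp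
  finally have "a - b = 0\<^sub>v s" using ind a b by simp
  then show ?thesis using vec_minus_zero a b by blast
qed

lemma cancel_left:
  fixes N X :: "'a::field mat"
  assumes N: "N \<in> carrier_mat s k"
    and ind: "\<forall>c\<in>carrier_vec s. transpose_mat N *\<^sub>v c = 0\<^sub>v k \<longrightarrow> c = 0\<^sub>v s"
    and X: "X \<in> carrier_mat s s" and e: "X * N = N"
  shows "X = 1\<^sub>m s"
proof (rule eq_matI)
  show "dim_row X = dim_row (1\<^sub>m s)" "dim_col X = dim_col (1\<^sub>m s)" using X by auto
  fix i j assume i: "i < dim_row (1\<^sub>m s)" and j: "j < dim_col (1\<^sub>m s)"
  then have i': "i < s" and j': "j < s" by auto
  have "transpose_mat N *\<^sub>v row X i = row N i" using rs_mult_row[OF N X i'] e by simp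
  also have "\<dots> = transpose_mat N *\<^sub>v unit_vec s i" using rs_row[OF N i'] by simp
  finally have e2: "transpose_mat N *\<^sub>v row X i = transpose_mat N *\<^sub>v unit_vec s i" .
  have rX: "row X i \<in> carrier_vec s" using X by (simp add: row_def)
  have "row X i = unit_vec s i" using indep_inj[OF N ind rX _ e2] by simp
  then have "row X i $ j = unit_vec s i $ j" by simp
  then show "X $$ (i, j) = 1\<^sub>m s $$ (i, j)" using X i' j' by auto
qed

lemma scale_lemma:
  fixes M d :: "'a::field mat"
  assumes M: "M \<in> carrier_mat s k" and d: "d \<in> carrier_mat k k" and dg: "diagonal_mat d"
    and c: "c \<in> carrier_vec s"
  shows "transpose_mat (M * d) *\<^sub>v c = vec k (\<lambda>j. (transpose_mat M *\<^sub>v c) $ j * d $$ (j, j))"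
proof (rule eq_vecI)
  show "dim_vec (transpose_mat (M * d) *\<^sub>v c) = dim_vec (vec k (\<lambda>j. (transpose_mat M *\<^sub>v c) $ j * d $$ (j, j)))"
    using M d by simp
  fix j assume "j < dim_vec (vec k (\<lambda>j. (transpose_mat M *\<^sub>v c) $ j * d $$ (j, j)))"
  then have j: "j < k" by simp
  have cd: "col d j = d $$ (j, j) \<cdot>\<^sub>v unit_vec k j"
  proof (rule eq_vecI)
    show "dim_vec (col d j) = dim_vec (d $$ (j, j) \<cdot>\<^sub>v unit_vec k j)" using d by simp
    fix i assume "i < dim_vec (d $$ (j, j) \<cdot>\<^sub>v unit_vec k j)"
    then have i: "i < k" by simp
    show "col d j $ i = (d $$ (j, j) \<cdot>\<^sub>v unit_vec k j) $ i"
      using dg d i j unfolding diagonal_mat_def by (cases "i = j") auto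
  qed
  have Mu: "M *\<^sub>v unit_vec k j = col M j"
  proof (rule eq_vecI)
    show "dim_vec (M *\<^sub>v unit_vec k j) = dim_vec (col M j)" using M by simp
    fix i assume "i < dim_vec (col M j)"
    then have i: "i < s" using M by simp
    show "(M *\<^sub>v unit_vec k j) $ i = col M j $ i" using M i j by simp
  qed
  have "(transpose_mat (M * d) *\<^sub>v c) $ j = col (M * d) j \<bullet> c" using M d j by simp
  also have "\<dots> = (M *\<^sub>v col d j) \<bullet> c" using M d j by simp
  also have "\<dots> = (d $$ (j, j) \<cdot>\<^sub>v col M j) \<bullet> c"
    using cd Mu mult_mat_vec[OF M, of "unit_vec k j" "d $$ (j, j)"] by simp
  also have "\<dots> = d $$ (j, j) * (col M j \<bullet> c)" using M c by simp
  also have "\<dots> = (transpose_mat M *\<^sub>v c) $ j * d $$ (j, j)" using M j by simp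
  finally show "(transpose_mat (M * d) *\<^sub>v c) $ j = vec k (\<lambda>j. (transpose_mat M *\<^sub>v c) $ j * d $$ (j, j)) $ j"
    using j by simp
qed

lemma mat_inv_eq:
  fixes R B :: "'a::field mat"
  assumes R: "R \<in> carrier_mat s s" and B: "B \<in> carrier_mat s s" and RB: "R * B = 1\<^sub>m s" and BR: "B * R = 1\<^sub>m s"
  shows "mat_inv s R = B"
  unfolding mat_inv_def
proof (rule the_equality)
  show "B \<in> carrier_mat s s \<and> R * B = 1\<^sub>m s \<and> B * R = 1\<^sub>m s" using B RB BR by simp
  fix Ri assume Ri: "Ri \<in> carrier_mat s s \<and> R * Ri = 1\<^sub>m s \<and> Ri * R = 1\<^sub>m s"
  have "Ri = Ri * (R * B)" using RB Ri right_mult_one_mat[of Ri s s] by simp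
  also have "\<dots> = (Ri * R) * B" using Ri R B by (intro assoc_mult_mat[symmetric]) auto
  also have "\<dots> = B" using Ri B left_mult_one_mat[of B s s] by simp
  finally show "Ri = B" .
qed


lemma matrix_part:
  fixes M M' :: "'a::field mat"
  assumes gM: "generator_matrix M s k V" and gM': "generator_matrix M' s k V'"
  shows "(\<exists>f \<in> GLmat s \<times> Dmat k. Fact s M f = M') \<longleftrightarrow>
         (\<exists>dd. (\<forall>i<k. dd i \<noteq> 0) \<and> V' = (\<lambda>v. vec k (\<lambda>i. v $ i * dd i)) ` V)"
proof -
  have M: "M \<in> carrier_mat s k" and VM: "V = rs M s"
    and indM: "\<forall>c\<in>carrier_vec s. transpose_mat M *\<^sub>v c = 0\<^sub>v k \<longrightarrow> c = 0\<^sub>v s"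
    using gM unfolding generator_matrix_def unfolding rs_def by auto
  have M': "M' \<in> carrier_mat s k" and VM': "V' = rs M' s"
    and indM': "\<forall>c\<in>carrier_vec s. transpose_mat M' *\<^sub>v c = 0\<^sub>v k \<longrightarrow> c = 0\<^sub>v s"
    using gM' unfolding generator_matrix_def unfolding rs_def by auto
  show ?thesis
  proof
    assume "\<exists>f \<in> GLmat s \<times> Dmat k. Fact s M f = M'"
    then obtain R d where R: "R \<in> GLmat s" and d: "d \<in> Dmat k" and F: "Fact s M (R, d) = M'" by auto
    have Rc: "R \<in> carrier_mat s s" and Ri: "invertible_mat R" using R by (auto simp: GLmat_def)
    obtain B where RB: "R * B = 1\<^sub>m (dim_row R)" and BR: "B * R = 1\<^sub>m (dim_row B)"
      using Ri unfolding invertible_mat_def inverts_mat_def by blast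
    have dR: "dim_row R = s" "dim_col R = s" using Rc by auto
    have RB': "R * B = 1\<^sub>m s" using RB dR by simp
    have e1: "dim_col (R * B) = dim_col (1\<^sub>m s :: 'a mat)" using RB' by (rule arg_cong)
    have Bcol: "dim_col B = s" using e1 by (simp only: index_mult_mat(3) index_one_mat(3))
    have e2: "dim_col (B * R) = dim_col (1\<^sub>m (dim_row B) :: 'a mat)" using BR by (rule arg_cong)
    have x: "dim_col R = dim_row B" using e2 by (simp only: index_mult_mat(3) index_one_mat(3))
    have Brow: "dim_row B = s" by (rule trans[OF x[symmetric] dR(2)])
    have Bc: "B \<in> carrier_mat s s" by (rule carrier_matI[OF Brow Bcol])
    have BR': "B * R = 1\<^sub>m s" using BR unfolding Brow .
    have inv: "mat_inv s R = B" using mat_inv_eq[OF Rc Bc RB' BR'] .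
    have dc: "d \<in> carrier_mat k k" and dg: "diagonal_mat d" and dnz: "\<forall>i<k. d $$ (i, i) \<noteq> 0"
      using d by (auto simp: Dmat_def)
    have M'eq: "M' = B * (M * d)" using F inv M Bc dc by (simp add: Fact_def assoc_mult_mat)
    let ?sc = "\<lambda>v :: 'a vec. vec k (\<lambda>i. v $ i * d $$ (i, i))"
    have Md: "M * d \<in> carrier_mat s k" using M dc by simp
    have key: "transpose_mat M' *\<^sub>v c = ?sc (transpose_mat M *\<^sub>v (transpose_mat B *\<^sub>v c))"
      if c: "c \<in> carrier_vec s" for c
    proof -
      have "transpose_mat M' = transpose_mat (M * d) * transpose_mat B"
        using M'eq transpose_mult[OF Bc Md] by simp
      then have "transpose_mat M' *\<^sub>v c = transpose_mat (M * d) *\<^sub>v (transpose_mat B *\<^sub>v c)"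
        using Md Bc c by simp
      also have "\<dots> = ?sc (transpose_mat M *\<^sub>v (transpose_mat B *\<^sub>v c))"
        by (rule scale_lemma[OF M dc dg]) (use Bc c in simp)
      finally show ?thesis .
    qed
    have "V' = ?sc ` V"
    proof
      show "V' \<subseteq> ?sc ` V"
      proof
        fix v assume "v \<in> V'"
        then obtain c where c: "c \<in> carrier_vec s" "v = transpose_mat M' *\<^sub>v c" using VM' unfolding rs_def by auto
        have "transpose_mat B *\<^sub>v c \<in> carrier_vec s" using Bc c by simp
        then have "transpose_mat M *\<^sub>v (transpose_mat B *\<^sub>v c) \<in> V" using VM unfolding rs_def by auto
        then show "v \<in> ?sc ` V" using key[OF c(1)] c(2) by simp
      qed
      show "?sc ` V \<subseteq> V'"
      proof
        fix v assume "v \<in> ?sc ` V"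
        then obtain c where c: "c \<in> carrier_vec s" "v = ?sc (transpose_mat M *\<^sub>v c)" using VM unfolding rs_def by auto
        let ?c' = "transpose_mat R *\<^sub>v c"
        have c': "?c' \<in> carrier_vec s" using Rc c by simp
        have "transpose_mat B *\<^sub>v ?c' = (transpose_mat B * transpose_mat R) *\<^sub>v c" using Bc Rc c by simp
        also have "transpose_mat B * transpose_mat R = transpose_mat (R * B)"
          using transpose_mult[OF Rc Bc] by simp
        also have "\<dots> = 1\<^sub>m s" using RB' by simp
        finally have "transpose_mat B *\<^sub>v ?c' = c" using c by simp
        then have "v = transpose_mat M' *\<^sub>v ?c'" using key[OF c'] c(2) by simp
        then show "v \<in> V'" using c' VM' unfolding rs_def by auto
      qed
    qed
    then show "\<exists>dd. (\<forall>i<k. dd i \<noteq> 0) \<and> V' = (\<lambda>v. vec k (\<lambda>i. v $ i * dd i)) ` V"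
      using dnz by (intro exI[of _ "\<lambda>i. d $$ (i, i)"] conjI) simp_all
  next
    assume "\<exists>dd. (\<forall>i<k. dd i \<noteq> 0) \<and> V' = (\<lambda>v. vec k (\<lambda>i. v $ i * dd i)) ` V"
    then obtain dd where dd: "\<forall>i<k. dd i \<noteq> 0" and V': "V' = (\<lambda>v. vec k (\<lambda>i. v $ i * dd i)) ` V" by blast
    define d where "d = mat k k (\<lambda>(i, j). if i = j then dd i else (0 :: 'a))"
    have dc: "d \<in> carrier_mat k k" by (simp add: d_def)
    have dg: "diagonal_mat d" by (simp add: d_def diagonal_mat_def)
    have dii: "d $$ (i, i) = dd i" if "i < k" for i using that by (simp add: d_def)
    have dD: "d \<in> Dmat k" using dc dg dii dd by (simp add: Dmat_def)
    define N where "N = M * d"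
    have Nc: "N \<in> carrier_mat s k" using M dc by (simp add: N_def)
    have NT: "transpose_mat N *\<^sub>v c = vec k (\<lambda>i. (transpose_mat M *\<^sub>v c) $ i * dd i)"
      if c: "c \<in> carrier_vec s" for c
    proof -
      have "transpose_mat N *\<^sub>v c = vec k (\<lambda>j. (transpose_mat M *\<^sub>v c) $ j * d $$ (j, j))"
        unfolding N_def by (rule scale_lemma[OF M dc dg c])
      also have "\<dots> = vec k (\<lambda>i. (transpose_mat M *\<^sub>v c) $ i * dd i)"
        by (rule eq_vecI) (simp_all add: dii)
      finally show ?thesis .
    qed
    have rsN: "rs N s = V'"
    proof
      show "rs N s \<subseteq> V'"
      proof
        fix v assume "v \<in> rs N s"
        then obtain c where c: "c \<in> carrier_vec s" "v = transpose_mat N *\<^sub>v c" unfolding rs_def by auto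
        have "transpose_mat M *\<^sub>v c \<in> V" using VM c(1) unfolding rs_def by auto
        then show "v \<in> V'" using V' NT[OF c(1)] c(2) by simp
      qed
      show "V' \<subseteq> rs N s"
      proof
        fix v assume "v \<in> V'"
        then obtain w where w: "w \<in> V" "v = vec k (\<lambda>i. w $ i * dd i)" using V' by auto
        then obtain c where c: "c \<in> carrier_vec s" "w = transpose_mat M *\<^sub>v c" using VM unfolding rs_def by auto
        have "v = transpose_mat N *\<^sub>v c" using w(2) c(2) NT[OF c(1)] by simp
        then show "v \<in> rs N s" using c(1) unfolding rs_def by auto
      qed
    qed
    have indN: "\<forall>c\<in>carrier_vec s. transpose_mat N *\<^sub>v c = 0\<^sub>v k \<longrightarrow> c = 0\<^sub>v s"
    proof (intro ballI impI)
      fix c assume c: "c \<in> carrier_vec s" and z: "transpose_mat N *\<^sub>v c = 0\<^sub>v k"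
      have "transpose_mat M *\<^sub>v c = 0\<^sub>v k"
      proof (rule eq_vecI)
        show "dim_vec (transpose_mat M *\<^sub>v c) = dim_vec (0\<^sub>v k :: 'a vec)" using M by simp
        fix i assume "i < dim_vec (0\<^sub>v k :: 'a vec)"
        then have i: "i < k" by simp
        have "(transpose_mat N *\<^sub>v c) $ i = 0" using z i by simp
        then have "(transpose_mat M *\<^sub>v c) $ i * dd i = 0" using NT[OF c] i by simp
        then show "(transpose_mat M *\<^sub>v c) $ i = (0\<^sub>v k :: 'a vec) $ i" using dd i by simp
      qed
      then show "c = 0\<^sub>v s" using indM c by simp
    qed
    obtain P where P: "P \<in> carrier_mat s s" and NP: "N = P * M'"
      using span_factor[OF Nc M'] rsN VM' by auto
    obtain Q where Q: "Q \<in> carrier_mat s s" and MQ: "M' = Q * N"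
      using span_factor[OF M' Nc] rsN VM' by auto
    have "(P * Q) * N = N"
    proof -
      have "(P * Q) * N = P * (Q * N)" using P Q Nc by (simp add: assoc_mult_mat)
      also have "\<dots> = P * M'" by (simp only: MQ)
      also have "\<dots> = N" by (simp only: NP)
      finally show ?thesis .
    qed
    then have PQ: "P * Q = 1\<^sub>m s" using cancel_left[OF Nc indN] P Q by simp
    have QP: "Q * P = 1\<^sub>m s" using mat_mult_left_right_inverse[OF P Q PQ] .
    have inv: "mat_inv s P = Q" using mat_inv_eq[OF P Q PQ QP] .
    have sq: "square_mat P" using P by simp
    have i1: "inverts_mat P Q" unfolding inverts_mat_def using PQ P by simp
    have i2: "inverts_mat Q P" unfolding inverts_mat_def using QP Q by simp
    have "invertible_mat P" unfolding invertible_mat_def using sq i1 i2 by blast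
    then have PG: "P \<in> GLmat s" using P by (simp add: GLmat_def)
    have "Fact s M (P, d) = Q * M * d" using inv by (simp add: Fact_def)
    also have "\<dots> = Q * N" using Q M dc by (simp add: N_def assoc_mult_mat)
    also have "\<dots> = M'" using MQ by simp
    finally have "Fact s M (P, d) = M'" .
    then show "\<exists>f \<in> GLmat s \<times> Dmat k. Fact s M f = M'" using PG dD by blast
  qed
qed


theorem lemma4p3:
  fixes n k s :: nat
    and Om :: "nat \<Rightarrow> nat set"           \<comment> \<open>Om i = Omega_(i+1), i < k\<close>
    and H :: "(nat \<Rightarrow> nat) set"
    and \<phi> :: "nat \<Rightarrow> nat \<Rightarrow> nat"          \<comment> \<open>\<phi> j = phi_(j+1), 1 \<le> j < k\<close>
    and g1 :: "nat \<Rightarrow> nat"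
    and \<kappa> :: "nat \<Rightarrow> nat"
    and M M' :: "'p::prime_card mod_ring mat"
  defines "p \<equiv> CARD('p)"
    and "gs \<equiv> (\<lambda>j. if j = 0 then g1 else conjp g1 (ovl (Om 0) (Om j) (\<phi> j)))"
    and "B \<equiv> gen_perm (\<Union>i<k. {\<sigma>. \<sigma> permutes Om i \<and> (\<lambda>g. conjp g \<sigma>) ` (restr (Om i) ` H) = restr (Om i) ` H})"
    and "K \<equiv> gen_perm {ovl (Om 0) (Om j) (\<phi> j) | j. 1 \<le> j \<and> j < k}"
  assumes n_def: "n = p * k" and k_pos: "0 < k"
    and H_sub: "is_perm_subgroup H (Sn n)"
    and orb_cover: "(\<Union>i<k. Om i) = {1..n}"
    and orb_disj: "\<forall>i<k. \<forall>j<k. i \<noteq> j \<longrightarrow> Om i \<inter> Om j = {}"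
    and orb_card: "\<forall>i<k. card (Om i) = p"
    and orbits: "\<forall>i<k. \<forall>x\<in>Om i. {h x | h. h \<in> H} = Om i"
    and cyc: "\<forall>i<k. cyclic_of_order (restr (Om i) ` H) p"
    and phi: "\<forall>j. 1 \<le> j \<and> j < k \<longrightarrow> perm_iso_witness (Om 0) (Om j) (restr (Om 0) ` H) (restr (Om j) ` H) (\<phi> j)"
    and g1_gen: "restr (Om 0) ` H = range (\<lambda>m. g1 ^^ m)"
    and H_card: "card H = p ^ s"
    and kappa: "\<kappa> \<in> K"
    and M_gen: "generator_matrix M s k ((gammap k gs :: (nat \<Rightarrow> nat) \<Rightarrow> 'p mod_ring vec) ` H)"
    and M'_gen: "generator_matrix M' s k ((gammap k gs :: (nat \<Rightarrow> nat) \<Rightarrow> 'p mod_ring vec) ` ((\<lambda>h. conjp h (inv_into UNIV \<kappa>)) ` H))"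
  shows "(\<exists>b\<in>B. \<kappa> \<circ> b \<in> normaliser (Sn n) H) \<longleftrightarrow>
         (\<exists>f \<in> GLmat s \<times> Dmat k. Fact s M f = M')"
proof -
  have pp: "prime p" unfolding p_def by (rule prime_card)
  interpret I: blk n k p Om H \<phi> g1
  proof (unfold_locales)
    show "prime p" by (rule pp)
  qed (use n_def k_pos H_sub orb_cover orb_disj orb_card orbits cyc phi g1_gen in auto)
  have q: "CARD('p) = p" by (simp add: p_def)
  have gs_eq: "I.gs = gs" by (rule ext) (simp add: I.gs_def I.ov_def gs_def)
  have B_eq: "B = gen_perm I.SB" by (simp add: B_def I.SB_def I.G_def)
  have K_eq: "K = gen_perm {I.ov j | j. 1 \<le> j \<and> j < k}" by (simp add: K_def I.ov_def)
  have kap: "\<kappa> \<in> gen_perm {I.ov j | j. 1 \<le> j \<and> j < k}" using kappa K_eq by simp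
  have G: "(\<exists>b\<in>gen_perm I.SB. \<kappa> \<circ> b \<in> normaliser (Sn n) H) \<longleftrightarrow>
         (\<exists>dd :: nat \<Rightarrow> 'p mod_ring. (\<forall>i<k. dd i \<noteq> 0) \<and>
           (gammap k I.gs :: _ \<Rightarrow> 'p mod_ring vec) ` ((\<lambda>h. conjp h (inv_into UNIV \<kappa>)) ` H) =
           (\<lambda>v. vec k (\<lambda>i. v $ i * dd i)) ` ((gammap k I.gs :: _ \<Rightarrow> 'p mod_ring vec) ` H))"
    by (rule I.group_main[OF q kap])
  have Mx: "(\<exists>f \<in> GLmat s \<times> Dmat k. Fact s M f = M') \<longleftrightarrow>
         (\<exists>dd. (\<forall>i<k. dd i \<noteq> 0) \<and>
           (gammap k gs :: _ \<Rightarrow> 'p mod_ring vec) ` ((\<lambda>h. conjp h (inv_into UNIV \<kappa>)) ` H) =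
           (\<lambda>v. vec k (\<lambda>i. v $ i * dd i)) ` ((gammap k gs :: _ \<Rightarrow> 'p mod_ring vec) ` H))"
    by (rule matrix_part[OF M_gen M'_gen])
  show ?thesis unfolding B_eq using G Mx gs_eq by simp
qed

end
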